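(* A connected block-cactus graph $G$ is $1$-perfectly orientable if and only if at most one block of $G$ is a cycle of length at least four.
   Context: All graphs are finite and simple. A graph is biconnected if it is connected with no cut vertex; a block is a maximal biconnected subgraph. A block-cactus graph is a graph each of whose blocks is either a cycle or a complete graph. An orientation of $G$ is $1$-perfect if for every vertex the out-neighborhood is a clique in $G$; $G$ is $1$-perfectly orientable if it has a $1$-perfect orientation. *)

theory Defs
  imports Main
begin

definition simple_graph :: "'a set \<Rightarrow> ('a \<Rightarrow> 'a \<Rightarrow> bool) \<Rightarrow> bool" where
  "simple_graph V E \<longleftrightarrow> finite V \<and>
     (\<forall>u v. E u v \<longrightarrow> u \<in> V \<and> v \<in> V \<and> u \<noteq> v \<and> E v u)"

definition reachable :: "'a set \<Rightarrow> ('a \<Rightarrow> 'a \<Rightarrow> bool) \<Rightarrow> 'a \<Rightarrow> 'a \<Rightarrow> bool" where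
  "reachable V E u v \<longleftrightarrow> u \<in> V \<and> v \<in> V \<and>
     (\<lambda>x y. x \<in> V \<and> y \<in> V \<and> E x y)\<^sup>*\<^sup>* u v"

definition connected_graph :: "'a set \<Rightarrow> ('a \<Rightarrow> 'a \<Rightarrow> bool) \<Rightarrow> bool" where
  "connected_graph V E \<longleftrightarrow> V \<noteq> {} \<and> (\<forall>u\<in>V. \<forall>v\<in>V. reachable V E u v)"

definition del_vertex :: "'a \<Rightarrow> ('a \<Rightarrow> 'a \<Rightarrow> bool) \<Rightarrow> 'a \<Rightarrow> 'a \<Rightarrow> bool" where
  "del_vertex w E = (\<lambda>x y. E x y \<and> x \<noteq> w \<and> y \<noteq> w)"

definition cut_vertex :: "'a set \<Rightarrow> ('a \<Rightarrow> 'a \<Rightarrow> bool) \<Rightarrow> 'a \<Rightarrow> bool" where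
  "cut_vertex V E w \<longleftrightarrow> w \<in> V \<and>
     (\<exists>x\<in>V - {w}. \<exists>y\<in>V - {w}. reachable V E x y \<and>
        \<not> reachable (V - {w}) (del_vertex w E) x y)"

definition biconnected :: "'a set \<Rightarrow> ('a \<Rightarrow> 'a \<Rightarrow> bool) \<Rightarrow> bool" where
  "biconnected V E \<longleftrightarrow> connected_graph V E \<and> (\<forall>w. \<not> cut_vertex V E w)"

definition subgraph :: "'a set \<Rightarrow> ('a \<Rightarrow> 'a \<Rightarrow> bool) \<Rightarrow> 'a set \<Rightarrow> ('a \<Rightarrow> 'a \<Rightarrow> bool) \<Rightarrow> bool" where
  "subgraph W F V E \<longleftrightarrow> simple_graph W F \<and> W \<subseteq> V \<and> (\<forall>u v. F u v \<longrightarrow> E u v)"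

definition is_block :: "'a set \<Rightarrow> ('a \<Rightarrow> 'a \<Rightarrow> bool) \<Rightarrow> 'a set \<Rightarrow> ('a \<Rightarrow> 'a \<Rightarrow> bool) \<Rightarrow> bool" where
  "is_block V E W F \<longleftrightarrow> subgraph W F V E \<and> biconnected W F \<and>
     (\<forall>W' F'. subgraph W' F' V E \<and> biconnected W' F' \<and> W \<subseteq> W' \<and> (\<forall>u v. F u v \<longrightarrow> F' u v)
        \<longrightarrow> W' = W \<and> F' = F)"

definition degree :: "'a set \<Rightarrow> ('a \<Rightarrow> 'a \<Rightarrow> bool) \<Rightarrow> 'a \<Rightarrow> nat" where
  "degree V E v = card {u \<in> V. E v u}"

definition is_cycle_graph :: "'a set \<Rightarrow> ('a \<Rightarrow> 'a \<Rightarrow> bool) \<Rightarrow> bool" where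
  "is_cycle_graph W F \<longleftrightarrow> simple_graph W F \<and> card W \<ge> 3 \<and> connected_graph W F \<and>
     (\<forall>v\<in>W. degree W F v = 2)"

definition is_complete_graph :: "'a set \<Rightarrow> ('a \<Rightarrow> 'a \<Rightarrow> bool) \<Rightarrow> bool" where
  "is_complete_graph W F \<longleftrightarrow> simple_graph W F \<and> (\<forall>u\<in>W. \<forall>v\<in>W. u \<noteq> v \<longrightarrow> F u v)"

definition block_cactus :: "'a set \<Rightarrow> ('a \<Rightarrow> 'a \<Rightarrow> bool) \<Rightarrow> bool" where
  "block_cactus V E \<longleftrightarrow>
     (\<forall>W F. is_block V E W F \<longrightarrow> is_cycle_graph W F \<or> is_complete_graph W F)"

definition orientation :: "'a set \<Rightarrow> ('a \<Rightarrow> 'a \<Rightarrow> bool) \<Rightarrow> ('a \<Rightarrow> 'a \<Rightarrow> bool) \<Rightarrow> bool" where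
  "orientation V E D \<longleftrightarrow>
     (\<forall>u v. D u v \<longrightarrow> E u v) \<and> (\<forall>u v. E u v \<longrightarrow> D u v \<or> D v u) \<and>
     (\<forall>u v. D u v \<longrightarrow> \<not> D v u)"

definition one_perfect_orientation :: "'a set \<Rightarrow> ('a \<Rightarrow> 'a \<Rightarrow> bool) \<Rightarrow> ('a \<Rightarrow> 'a \<Rightarrow> bool) \<Rightarrow> bool" where
  "one_perfect_orientation V E D \<longleftrightarrow> orientation V E D \<and>
     (\<forall>v\<in>V. \<forall>x y. D v x \<and> D v y \<and> x \<noteq> y \<longrightarrow> E x y)"

definition one_perfectly_orientable :: "'a set \<Rightarrow> ('a \<Rightarrow> 'a \<Rightarrow> bool) \<Rightarrow> bool" where
  "one_perfectly_orientable V E \<longleftrightarrow> (\<exists>D. one_perfect_orientation V E D)"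

end

theory Submission
  imports Defs
begin

lemma reach_mono:
  assumes "reachable V E x y" "V \<subseteq> V'" "\<And>u w. u \<in> V \<Longrightarrow> w \<in> V \<Longrightarrow> E u w \<Longrightarrow> E' u w"
  shows "reachable V' E' x y"
proof -
  have r: "(\<lambda>x y. x \<in> V \<and> y \<in> V \<and> E x y)\<^sup>*\<^sup>* x y" and xy: "x \<in> V" "y \<in> V"
    using assms(1) unfolding reachable_def by auto
  have "(\<lambda>x y. x \<in> V' \<and> y \<in> V' \<and> E' x y)\<^sup>*\<^sup>* x y"
    using r by (rule rtranclp_mono[THEN predicate2D, rotated]) (use assms in auto)
  then show ?thesis using xy assms(2) unfolding reachable_def by auto
qed

lemma reach_refl: "x \<in> V \<Longrightarrow> reachable V E x x"
  unfolding reachable_def by auto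

lemma reach_step: "x \<in> V \<Longrightarrow> y \<in> V \<Longrightarrow> E x y \<Longrightarrow> reachable V E x y"
  unfolding reachable_def by auto

lemma reach_trans: "reachable V E x y \<Longrightarrow> reachable V E y z \<Longrightarrow> reachable V E x z"
  unfolding reachable_def by auto

lemma reach_sym:
  assumes "\<And>u w. E u w \<Longrightarrow> E w u" "reachable V E x y"
  shows "reachable V E y x"
proof -
  have "(\<lambda>x y. x \<in> V \<and> y \<in> V \<and> E x y)\<^sup>*\<^sup>* x y" using assms(2) unfolding reachable_def by auto
  then have "(\<lambda>x y. x \<in> V \<and> y \<in> V \<and> E x y)\<^sup>*\<^sup>* y x"
  proof (induction rule: rtranclp_induct)
    case base then show ?case by simp
  next
    case (step y z)
    then have "(\<lambda>x y. x \<in> V \<and> y \<in> V \<and> E x y) z y" using assms(1) by auto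
    then show ?case using step.IH by (rule converse_rtranclp_into_rtranclp)
  qed
  then show ?thesis using assms(2) unfolding reachable_def by auto
qed

definition walk :: "('a \<Rightarrow> 'a \<Rightarrow> bool) \<Rightarrow> (nat \<Rightarrow> 'a) \<Rightarrow> nat \<Rightarrow> bool" where
  "walk E p n \<longleftrightarrow> (\<forall>i<n. E (p i) (p (Suc i)))"

lemma rtranclp_walk: "R\<^sup>*\<^sup>* x y \<Longrightarrow> \<exists>p n. p 0 = x \<and> p n = y \<and> walk R p n"
proof (induction rule: rtranclp_induct)
  case base
  show ?case by (rule exI[of _ "\<lambda>_. x"], rule exI[of _ 0]) (simp add: walk_def)
next
  case (step y z)
  then obtain p n where p: "p 0 = x" "p n = y" "walk R p n" by blast
  define q where "q = p(Suc n := z)"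
  have "q 0 = x" using p by (simp add: q_def)
  moreover have "q (Suc n) = z" by (simp add: q_def)
  moreover have "walk R q (Suc n)"
    unfolding walk_def
  proof (intro allI impI)
    fix i assume "i < Suc n"
    then consider "i < n" | "i = n" by linarith
    then show "R (q i) (q (Suc i))"
    proof cases
      case 1 then show ?thesis using p(3) by (simp add: q_def walk_def)
    next
      case 2 then show ?thesis using p(2) step(2) by (simp add: q_def)
    qed
  qed
  ultimately show ?case by blast
qed

lemma walk_rtranclp: "walk R p n \<Longrightarrow> R\<^sup>*\<^sup>* (p 0) (p n)"
proof (induction n)
  case 0 then show ?case by simp
next
  case (Suc n)
  then have "walk R p n" "R (p n) (p (Suc n))" by (auto simp: walk_def)
  then show ?case using Suc.IH by (meson rtranclp.rtrancl_into_rtrancl)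
qed

lemma reach_walk:
  assumes "reachable V E x y"
  shows "\<exists>p n. p 0 = x \<and> p n = y \<and> walk E p n \<and> (\<forall>i\<le>n. p i \<in> V)"
proof -
  have r: "(\<lambda>x y. x \<in> V \<and> y \<in> V \<and> E x y)\<^sup>*\<^sup>* x y" and x: "x \<in> V"
    using assms unfolding reachable_def by auto
  obtain p n where p: "p 0 = x" "p n = y" "walk (\<lambda>x y. x \<in> V \<and> y \<in> V \<and> E x y) p n"
    using rtranclp_walk[OF r] by blast
  have "walk E p n" using p(3) by (auto simp: walk_def)
  moreover have "\<forall>i\<le>n. p i \<in> V"
  proof (intro allI impI)
    fix i assume "i \<le> n"
    then show "p i \<in> V"
    proof (cases i)
      case 0 then show ?thesis using p x by simp
    next
      case (Suc j)
      then have "j < n" using \<open>i \<le> n\<close> by simp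
      then show ?thesis using p(3) Suc unfolding walk_def by blast
    qed
  qed
  ultimately show ?thesis using p by blast
qed

lemma walk_reach:
  assumes "walk E p n" "\<forall>i\<le>n. p i \<in> V"
  shows "reachable V E (p 0) (p n)"
proof -
  have "walk (\<lambda>x y. x \<in> V \<and> y \<in> V \<and> E x y) p n" using assms by (auto simp: walk_def)
  from walk_rtranclp[OF this] show ?thesis using assms(2) unfolding reachable_def by auto
qed

lemma walk_suffix: "walk E p n \<Longrightarrow> i \<le> n \<Longrightarrow> walk E (\<lambda>j. p (j + i)) (n - i)"
  by (auto simp: walk_def)

lemma walk_prefix: "walk E p n \<Longrightarrow> m \<le> n \<Longrightarrow> walk E p m"
  by (auto simp: walk_def)

lemma walk_shortcut_eq:
  assumes "walk E p n" "a < b" "b \<le> n" "p a = p b"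
  defines "q \<equiv> \<lambda>i. if i \<le> a then p i else p (i + (b - a))"
  shows "walk E q (n - (b - a)) \<and> q 0 = p 0 \<and> q (n - (b - a)) = p n"
proof (intro conjI)
  show "walk E q (n - (b - a))"
    unfolding walk_def
  proof (intro allI impI)
    fix i assume i: "i < n - (b - a)"
    consider "i < a" | "i = a" | "i > a" by linarith
    then show "E (q i) (q (Suc i))"
    proof cases
      case 1 then show ?thesis using assms(1) i assms(2,3) by (auto simp: q_def walk_def)
    next
      case 2
      have "E (p b) (p (Suc b))" using assms(1) i 2 assms(2,3) by (auto simp: walk_def)
      moreover have "Suc a + (b - a) = Suc b" using assms(2) by simp
      ultimately show ?thesis using 2 assms(4) by (simp add: q_def)
    next
      case 3
      have "E (p (i + (b - a))) (p (Suc (i + (b - a))))" using assms(1) i by (auto simp: walk_def)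
      then show ?thesis using 3 by (simp add: q_def)
    qed
  qed
  show "q 0 = p 0" by (simp add: q_def)
  show "q (n - (b - a)) = p n"
  proof (cases "n - (b - a) \<le> a")
    case True
    then have "n = b" using assms(2,3) by linarith
    then show ?thesis using True assms(2,4) by (simp add: q_def)
  next
    case False then show ?thesis using assms(2,3) by (simp add: q_def)
  qed
qed

lemma walk_shortcut_edge:
  assumes "walk E p n" "a < b" "b \<le> n" "E (p a) (p b)"
  defines "q \<equiv> \<lambda>i. if i \<le> a then p i else p (i + (b - a) - 1)"
  shows "walk E q (n - (b - a) + 1) \<and> q 0 = p 0 \<and> q (n - (b - a) + 1) = p n"
proof (intro conjI)
  show "walk E q (n - (b - a) + 1)"
    unfolding walk_def
  proof (intro allI impI)
    fix i assume i: "i < n - (b - a) + 1"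
    consider "i < a" | "i = a" | "i > a" by linarith
    then show "E (q i) (q (Suc i))"
    proof cases
      case 1 then show ?thesis using assms(1) i assms(2,3) by (auto simp: q_def walk_def)
    next
      case 2
      have "Suc a + (b - a) - 1 = b" using assms(2) by simp
      then show ?thesis using 2 assms(4) by (simp add: q_def)
    next
      case 3
      have e: "E (p (i + (b - a) - 1)) (p (Suc (i + (b - a) - 1)))" using assms(1) i assms(2,3) by (auto simp: walk_def)
      have "Suc (i + (b - a) - 1) = Suc i + (b - a) - 1" using assms(2) by simp
      then show ?thesis using 3 e by (simp add: q_def)
    qed
  qed
  show "q 0 = p 0" by (simp add: q_def)
  have "\<not> (n - (b - a) + 1 \<le> a)" using assms(2,3) by linarith
  moreover have "n - (b - a) + 1 + (b - a) - 1 = n" using assms(2,3) by linarith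
  ultimately show "q (n - (b - a) + 1) = p n" unfolding q_def by (metis (no_types, lifting))
qed


lemma conn_reach: "connected_graph W F \<Longrightarrow> x \<in> W \<Longrightarrow> y \<in> W \<Longrightarrow> reachable W F x y"
  by (simp add: connected_graph_def)

lemma bic_conn: "biconnected W F \<Longrightarrow> connected_graph W F"
  unfolding biconnected_def by simp

lemma bic_del:
  assumes "biconnected W F" "x \<in> W" "y \<in> W" "x \<noteq> z" "y \<noteq> z"
  shows "reachable (W - {z}) (del_vertex z F) x y"
proof (cases "z \<in> W")
  case True
  have r: "reachable W F x y" using assms unfolding biconnected_def connected_graph_def by blast
  have "\<not> cut_vertex W F z" using assms(1) unfolding biconnected_def by blast
  then have "\<forall>x\<in>W - {z}. \<forall>y\<in>W - {z}. reachable W F x y \<longrightarrow> reachable (W - {z}) (del_vertex z F) x y"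
    using True unfolding cut_vertex_def by simp
  then show ?thesis using r assms(2-5) by simp
next
  case False
  have "reachable W F x y" using assms unfolding biconnected_def connected_graph_def by blast
  moreover have "W \<subseteq> W - {z}" using False by blast
  ultimately show ?thesis
    by (rule reach_mono) (use False in \<open>auto simp: del_vertex_def\<close>)
qed

lemma bic_union:
  assumes b1: "biconnected W1 F1" and b2: "biconnected W2 F2"
    and ab: "a \<in> W1" "a \<in> W2" "b \<in> W1" "b \<in> W2" "a \<noteq> b"
  shows "biconnected (W1 \<union> W2) (\<lambda>u w. F1 u w \<or> F2 u w)"
proof -
  let ?U = "W1 \<union> W2" and ?F = "\<lambda>u w. F1 u w \<or> F2 u w"
  have to_c: "reachable (?U - {z}) (del_vertex z ?F) x c"
    if "x \<in> ?U" "x \<noteq> z" "c \<in> {a, b}" "c \<noteq> z" for x z c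
  proof -
    from that(1) consider "x \<in> W1" | "x \<in> W2" by blast
    then show ?thesis
    proof cases
      case 1
      have "reachable (W1 - {z}) (del_vertex z F1) x c"
        using bic_del[OF b1 1, of c z] that ab by auto
      then show ?thesis by (rule reach_mono) (auto simp: del_vertex_def)
    next
      case 2
      have "reachable (W2 - {z}) (del_vertex z F2) x c"
        using bic_del[OF b2 2, of c z] that ab by auto
      then show ?thesis by (rule reach_mono) (auto simp: del_vertex_def)
    qed
  qed
  have from_c: "reachable (?U - {z}) (del_vertex z ?F) c y"
    if "y \<in> ?U" "y \<noteq> z" "c \<in> {a, b}" "c \<noteq> z" for y z c
  proof -
    from that(1) consider "y \<in> W1" | "y \<in> W2" by blast
    then show ?thesis
    proof cases
      case 1
      have "reachable (W1 - {z}) (del_vertex z F1) c y"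
        using bic_del[OF b1 _ 1, of c z] that ab by auto
      then show ?thesis by (rule reach_mono) (auto simp: del_vertex_def)
    next
      case 2
      have "reachable (W2 - {z}) (del_vertex z F2) c y"
        using bic_del[OF b2 _ 2, of c z] that ab by auto
      then show ?thesis by (rule reach_mono) (auto simp: del_vertex_def)
    qed
  qed
  have key: "reachable (?U - {z}) (del_vertex z ?F) x y"
    if "x \<in> ?U" "y \<in> ?U" "x \<noteq> z" "y \<noteq> z" for x y z
  proof -
    obtain c where c: "c \<in> {a, b}" "c \<noteq> z" using ab(5) by blast
    show ?thesis using to_c[OF that(1,3) c] from_c[OF that(2,4) c] by (rule reach_trans)
  qed
  have conn: "connected_graph ?U ?F"
    unfolding connected_graph_def
  proof (intro conjI ballI)
    show "?U \<noteq> {}" using ab by blast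
  next
    fix x y assume xy: "x \<in> ?U" "y \<in> ?U"
    have r1: "reachable ?U ?F x a"
    proof -
      from xy(1) consider "x \<in> W1" | "x \<in> W2" by blast
      then show ?thesis
      proof cases
        case 1 then have "reachable W1 F1 x a" using conn_reach[OF bic_conn[OF b1]] ab by blast
        then show ?thesis by (rule reach_mono) auto
      next
        case 2 then have "reachable W2 F2 x a" using conn_reach[OF bic_conn[OF b2]] ab by blast
        then show ?thesis by (rule reach_mono) auto
      qed
    qed
    have r2: "reachable ?U ?F a y"
    proof -
      from xy(2) consider "y \<in> W1" | "y \<in> W2" by blast
      then show ?thesis
      proof cases
        case 1 then have "reachable W1 F1 a y" using conn_reach[OF bic_conn[OF b1]] ab by blast
        then show ?thesis by (rule reach_mono) auto
      next
        case 2 then have "reachable W2 F2 a y" using conn_reach[OF bic_conn[OF b2]] ab by blast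
        then show ?thesis by (rule reach_mono) auto
      qed
    qed
    show "reachable ?U ?F x y" using r1 r2 by (rule reach_trans)
  qed
  have "\<not> cut_vertex ?U ?F z" for z
    using key unfolding cut_vertex_def by blast
  then show ?thesis using conn unfolding biconnected_def by blast
qed

lemma subgraph_union:
  assumes "subgraph W1 F1 V E" "subgraph W2 F2 V E"
  shows "subgraph (W1 \<union> W2) (\<lambda>u w. F1 u w \<or> F2 u w) V E"
proof -
  have a: "finite W1" "\<forall>u v. F1 u v \<longrightarrow> u \<in> W1 \<and> v \<in> W1 \<and> u \<noteq> v \<and> F1 v u" "W1 \<subseteq> V" "\<forall>u v. F1 u v \<longrightarrow> E u v"
    using assms(1) unfolding subgraph_def simple_graph_def by simp_all
  have b: "finite W2" "\<forall>u v. F2 u v \<longrightarrow> u \<in> W2 \<and> v \<in> W2 \<and> u \<noteq> v \<and> F2 v u" "W2 \<subseteq> V" "\<forall>u v. F2 u v \<longrightarrow> E u v"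
    using assms(2) unfolding subgraph_def simple_graph_def by simp_all
  show ?thesis unfolding subgraph_def simple_graph_def
    using a b by auto
qed

lemma block_absorb:
  assumes blk: "is_block V E W F" and sg: "subgraph W' F' V E" and bc: "biconnected W' F'"
    and ab: "a \<in> W" "a \<in> W'" "b \<in> W" "b \<in> W'" "a \<noteq> b"
  shows "W' \<subseteq> W \<and> (\<forall>u w. F' u w \<longrightarrow> F u w)"
proof -
  let ?U = "W \<union> W'" and ?F = "\<lambda>u w. F u w \<or> F' u w"
  have s1: "subgraph W F V E" and b1: "biconnected W F"
    and mx: "\<And>W'' F''. subgraph W'' F'' V E \<Longrightarrow> biconnected W'' F'' \<Longrightarrow> W \<subseteq> W'' \<Longrightarrow> (\<forall>u v. F u v \<longrightarrow> F'' u v) \<Longrightarrow> W'' = W \<and> F'' = F"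
    using blk unfolding is_block_def by blast+
  have "subgraph ?U ?F V E" using subgraph_union[OF s1 sg] .
  moreover have "biconnected ?U ?F" using bic_union[OF b1 bc ab] .
  ultimately have "?U = W \<and> ?F = F" using mx[of ?U ?F] by blast
  then show ?thesis by (metis Un_upper2)
qed
lemma k2_bic:
  assumes "u \<noteq> w"
  shows "biconnected {u, w} (\<lambda>x y. (x = u \<and> y = w) \<or> (x = w \<and> y = u))"
proof -
  let ?F = "\<lambda>x y. (x = u \<and> y = w) \<or> (x = w \<and> y = u)"
  have "connected_graph {u, w} ?F"
    unfolding connected_graph_def
  proof (intro conjI ballI)
    fix x y assume x: "x \<in> {u, w}" and y: "y \<in> {u, w}"
    show "reachable {u, w} ?F x y"
    proof (cases "x = y")
      case True then show ?thesis using x by (simp add: reach_refl)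
    next
      case False
      then have "?F x y" using x y by blast
      then show ?thesis using x y by (rule reach_step[rotated 2])
    qed
  qed simp
  moreover have "\<not> cut_vertex {u, w} ?F z" for z
  proof
    assume "cut_vertex {u, w} ?F z"
    then have "\<exists>x\<in>{u, w} - {z}. \<exists>y\<in>{u, w} - {z}. reachable {u, w} ?F x y \<and> \<not> reachable ({u, w} - {z}) (del_vertex z ?F) x y"
      and z: "z \<in> {u, w}"
      unfolding cut_vertex_def by (rule conjunct2, rule conjunct1)
    then obtain x y where xy: "x \<in> {u, w} - {z}" "y \<in> {u, w} - {z}"
      "\<not> reachable ({u, w} - {z}) (del_vertex z ?F) x y"
      by (elim bexE conjE)
    have "x = y" using xy(1,2) z by auto
    then show False using reach_refl[OF xy(1)] xy(3) by simp
  qed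
  ultimately show ?thesis unfolding biconnected_def by blast
qed

lemma block_edge:
  assumes sg: "simple_graph V E" and blk: "is_block V E W F" and uw: "u \<in> W" "w \<in> W" "E u w"
  shows "F u w"
proof -
  have sgv: "\<forall>u v. E u v \<longrightarrow> u \<in> V \<and> v \<in> V \<and> u \<noteq> v \<and> E v u" using sg unfolding simple_graph_def by simp
  then have ne: "u \<noteq> w" and inV: "u \<in> V" "w \<in> V" and sym: "E w u" using uw by blast+
  let ?F = "\<lambda>x y. (x = u \<and> y = w) \<or> (x = w \<and> y = u)"
  have "simple_graph {u, w} ?F" unfolding simple_graph_def using ne by auto
  then have "subgraph {u, w} ?F V E"
    unfolding subgraph_def using inV uw(3) sym by auto
  from block_absorb[OF blk this k2_bic[OF ne], of u w] uw ne show ?thesis by auto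
qed

lemma block_subgraph: "is_block V E W F \<Longrightarrow> subgraph W F V E"
  unfolding is_block_def by blast

lemma block_exists:
  assumes sg: "simple_graph V E" and sub: "subgraph W F V E" and bc: "biconnected W F"
  shows "\<exists>W' F'. is_block V E W' F' \<and> W \<subseteq> W' \<and> (\<forall>u w. F u w \<longrightarrow> F' u w)"
proof -
  define P where "P = (\<lambda>(W', F'). subgraph W' F' V E \<and> biconnected W' F' \<and> W \<subseteq> W' \<and> (\<forall>u w. F u w \<longrightarrow> F' u w))"
  define f where "f = (\<lambda>(W' :: 'a set, F' :: 'a \<Rightarrow> 'a \<Rightarrow> bool). card W' + card {(x, y). F' x y})"
  have finV: "finite V" using sg unfolding simple_graph_def by blast
  have fin_edges: "finite {(x, y). F' x y}" and card_edges: "card {(x, y). F' x y} \<le> card (V \<times> V)"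
    if "subgraph W' F' V E" for W' F'
  proof -
    have sub: "{(x, y). F' x y} \<subseteq> V \<times> V" using that unfolding subgraph_def simple_graph_def by blast
    have fVV: "finite (V \<times> V)" using finV by simp
    show "finite {(x, y). F' x y}" by (rule finite_subset[OF sub fVV])
    show "card {(x, y). F' x y} \<le> card (V \<times> V)" by (rule card_mono[OF fVV sub])
  qed
  have "P (W, F)" using sub bc by (simp add: P_def)
  moreover have "\<forall>y. P y \<longrightarrow> f y < card V + card (V \<times> V) + 1"
  proof (intro allI impI)
    fix y assume "P y"
    obtain W' F' where y: "y = (W', F')" by (cases y)
    have s: "subgraph W' F' V E" using \<open>P y\<close> y by (simp add: P_def)
    then have "W' \<subseteq> V" unfolding subgraph_def by simp
    then have "card W' \<le> card V" using finV by (rule card_mono[rotated])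
    then show "f y < card V + card (V \<times> V) + 1" using card_edges[OF s] y by (simp add: f_def)
  qed
  ultimately obtain z where z: "P z" "\<forall>y. P y \<longrightarrow> f y \<le> f z"
    using ex_has_greatest_nat[of P "(W, F)" f "card V + card (V \<times> V) + 1"] by blast
  obtain W' F' where zz: "z = (W', F')" by (cases z)
  have pz: "subgraph W' F' V E" "biconnected W' F'" "W \<subseteq> W'" "\<forall>u w. F u w \<longrightarrow> F' u w"
    using z(1) zz by (simp_all add: P_def)
  have "is_block V E W' F'"
    unfolding is_block_def
  proof (intro conjI allI impI)
    show "subgraph W' F' V E" "biconnected W' F'" using pz by auto
  next
    fix W'' F'' assume h: "subgraph W'' F'' V E \<and> biconnected W'' F'' \<and> W' \<subseteq> W'' \<and> (\<forall>u v. F' u v \<longrightarrow> F'' u v)"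
    then have h1: "subgraph W'' F'' V E" and h2: "W' \<subseteq> W''" and h3: "\<forall>u v. F' u v \<longrightarrow> F'' u v" by simp_all
    from h have "P (W'', F'')" using pz by (auto simp: P_def)
    then have le: "f (W'', F'') \<le> f (W', F')" using z zz by blast
    have fW'': "finite W''" using h1 unfolding subgraph_def simple_graph_def by simp
    have c1: "card W' \<le> card W''" using card_mono[OF fW'' h2] .
    have sub2: "{(x, y). F' x y} \<subseteq> {(x, y). F'' x y}" using h3 by auto
    have fe: "finite {(x, y). F'' x y}" using fin_edges[OF h1] .
    have c2: "card {(x, y). F' x y} \<le> card {(x, y). F'' x y}"
      using card_mono[OF fe sub2] .
    have e1: "card W' = card W''" and e2: "card {(x, y). F' x y} = card {(x, y). F'' x y}"
      using le c1 c2 by (simp_all add: f_def)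
    have eqW: "W' = W''" using card_subset_eq[OF fW'' h2 e1] .
    have "{(x, y). F' x y} = {(x, y). F'' x y}"
      using card_subset_eq[OF fe sub2 e2] .
    then have "\<forall>x y. F' x y \<longleftrightarrow> F'' x y" by (simp add: set_eq_iff)
    then have "F'' = F'" by (intro ext) simp
    then show "F'' = F'" by simp
    show "W'' = W'" using eqW by simp
  qed
  then show ?thesis using pz by blast
qed


lemma path_reach:
  assumes "a \<le> b" "\<forall>k. a \<le> k \<and> k \<le> b \<longrightarrow> c k \<in> S" "\<forall>k. a \<le> k \<and> k < b \<longrightarrow> G (c k) (c (Suc k))"
  shows "reachable S G (c a) (c b)"
  using assms
proof (induction b)
  case 0
  then have "a = 0" by simp
  then show ?case using 0 reach_refl by simp
next
  case (Suc b)
  show ?case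
  proof (cases "a = Suc b")
    case True
    then have "c (Suc b) \<in> S" using Suc.prems(2) by simp
    then show ?thesis using True by (simp add: reach_refl)
  next
    case False
    then have ab: "a \<le> b" using Suc.prems by simp
    have "reachable S G (c a) (c b)" using Suc.IH[OF ab] Suc.prems by simp
    moreover have "reachable S G (c b) (c (Suc b))"
      using Suc.prems ab by (intro reach_step) auto
    ultimately show ?thesis by (rule reach_trans)
  qed
qed

definition cyc_rel :: "(nat \<Rightarrow> 'a) \<Rightarrow> nat \<Rightarrow> 'a \<Rightarrow> 'a \<Rightarrow> bool" where
  "cyc_rel c L u w \<longleftrightarrow> (\<exists>i. Suc i < L \<and> ((u = c i \<and> w = c (Suc i)) \<or> (w = c i \<and> u = c (Suc i))))
     \<or> (u = c (L - 1) \<and> w = c 0) \<or> (w = c (L - 1) \<and> u = c 0)"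

lemma cyc_rel_sym: "cyc_rel c L u w \<Longrightarrow> cyc_rel c L w u"
  unfolding cyc_rel_def by blast

lemma cyc_rel_step: "Suc i < L \<Longrightarrow> cyc_rel c L (c i) (c (Suc i))"
  unfolding cyc_rel_def by blast

lemma cyc_rel_last: "cyc_rel c L (c (L - 1)) (c 0)"
  unfolding cyc_rel_def by blast

lemma cyc_rel_cases:
  assumes "cyc_rel c L u w"
    "\<And>i. Suc i < L \<Longrightarrow> u = c i \<Longrightarrow> w = c (Suc i) \<Longrightarrow> P"
    "\<And>i. Suc i < L \<Longrightarrow> w = c i \<Longrightarrow> u = c (Suc i) \<Longrightarrow> P"
    "u = c (L - 1) \<Longrightarrow> w = c 0 \<Longrightarrow> P"
    "w = c (L - 1) \<Longrightarrow> u = c 0 \<Longrightarrow> P"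
  shows P
  using assms unfolding cyc_rel_def by blast

lemma cycle_bic:
  fixes c :: "nat \<Rightarrow> 'a"
  assumes L: "3 \<le> L" and inj: "inj_on c {..<L}" and sg: "simple_graph V E"
    and inV: "\<forall>i<L. c i \<in> V"
    and edges: "\<forall>i. Suc i < L \<longrightarrow> E (c i) (c (Suc i))" and last: "E (c (L - 1)) (c 0)"
  shows "subgraph (c ` {..<L}) (cyc_rel c L) V E \<and> biconnected (c ` {..<L}) (cyc_rel c L)"
proof -
  let ?W = "c ` {..<L}" and ?F = "cyc_rel c L"
  have Esym: "\<And>u w. E u w \<Longrightarrow> E w u" using sg unfolding simple_graph_def by blast
  have cne: "c i \<noteq> c j" if "i < L" "j < L" "i \<noteq> j" for i j
    using inj that unfolding inj_on_def by blast
  have cW: "c k \<in> ?W" if "k < L" for k using that by simp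
  have Fprops: "u \<in> ?W \<and> w \<in> ?W \<and> u \<noteq> w \<and> E u w" if "?F u w" for u w
    using that
  proof (rule cyc_rel_cases)
    fix i assume i: "Suc i < L" "u = c i" "w = c (Suc i)"
    have "i < L" using i by simp
    show ?thesis using cW[OF \<open>i < L\<close>] cW[OF i(1)] cne[OF \<open>i < L\<close> i(1)] edges[rule_format, OF i(1)] i by simp
  next
    fix i assume i: "Suc i < L" "w = c i" "u = c (Suc i)"
    have "i < L" using i by simp
    show ?thesis using cW[OF \<open>i < L\<close>] cW[OF i(1)] cne[OF \<open>i < L\<close> i(1)] Esym[OF edges[rule_format, OF i(1)]] i by simp
  next
    assume i: "u = c (L - 1)" "w = c 0"
    have l: "L - 1 < L" "0 < L" "L - 1 \<noteq> 0" using L by simp_all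
    show ?thesis using cW[OF l(1)] cW[OF l(2)] cne[OF l] last i by simp
  next
    assume i: "w = c (L - 1)" "u = c 0"
    have l: "L - 1 < L" "0 < L" "L - 1 \<noteq> 0" using L by simp_all
    show ?thesis using cW[OF l(1)] cW[OF l(2)] cne[OF l] Esym[OF last] i by simp
  qed
  have fin: "finite ?W" by simp
  have simple: "simple_graph ?W ?F"
    unfolding simple_graph_def
  proof (rule conjI[OF fin], intro allI impI)
    fix u w assume "?F u w"
    then show "u \<in> ?W \<and> w \<in> ?W \<and> u \<noteq> w \<and> ?F w u" using Fprops[of u w] cyc_rel_sym[of c L u w] by simp
  qed
  have WV: "?W \<subseteq> V" using inV by auto
  have sub: "subgraph ?W ?F V E"
    unfolding subgraph_def using simple WV Fprops by simp
  have fwd: "reachable S G (c a) (c b)"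
    if "a \<le> b" "\<forall>k. a \<le> k \<and> k \<le> b \<longrightarrow> c k \<in> S" "\<forall>k. a \<le> k \<and> k < b \<longrightarrow> G (c k) (c (Suc k))"
    for a b S G
    using path_reach[OF that] .
  have r0: "reachable ?W ?F (c 0) (c j)" if "j < L" for j
  proof (rule fwd)
    show "0 \<le> j" by simp
    show "\<forall>k. 0 \<le> k \<and> k \<le> j \<longrightarrow> c k \<in> ?W" using that by simp
    show "\<forall>k. 0 \<le> k \<and> k < j \<longrightarrow> ?F (c k) (c (Suc k))"
      using that cyc_rel_step[of _ L c] by simp
  qed
  have conn: "connected_graph ?W ?F"
    unfolding connected_graph_def
  proof (intro conjI ballI)
    have "c 0 \<in> ?W" using L by simp
    then show "?W \<noteq> {}" by blast
  next
    fix x y assume "x \<in> ?W" "y \<in> ?W"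
    then obtain i j where ij: "i < L" "j < L" "x = c i" "y = c j" by blast
    have "reachable ?W ?F (c i) (c 0)" using reach_sym[OF cyc_rel_sym r0[OF ij(1)]] .
    from reach_trans[OF this r0[OF ij(2)]] show "reachable ?W ?F x y" using ij by simp
  qed
  have nocut: "\<not> cut_vertex ?W ?F w" for w
  proof
    assume cv: "cut_vertex ?W ?F w"
    then have "w \<in> ?W" unfolding cut_vertex_def by simp
    then obtain z where z: "z < L" "w = c z" by blast
    let ?S = "?W - {c z}" and ?G = "del_vertex (c z) ?F"
    have Gsym: "?G v u" if "?G u v" for u v
      using that cyc_rel_sym[of c L u v] unfolding del_vertex_def by simp
    have rsym: "reachable ?S ?G y x" if "reachable ?S ?G x y" for x y
      using reach_sym[of ?G ?S x y] Gsym that by blast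
    have inS: "c k \<in> ?S" if "k < L" "k \<noteq> z" for k using that cne[of k z] z by simp
    have Gstep: "?G (c k) (c (Suc k))" if "Suc k < L" "k \<noteq> z" "Suc k \<noteq> z" for k
    proof -
      have "k < L" using that by simp
      then have "c k \<noteq> c z" "c (Suc k) \<noteq> c z" using cne[of k z] cne[of "Suc k" z] z that by simp_all
      then show ?thesis unfolding del_vertex_def using cyc_rel_step[OF that(1)] by simp
    qed
    have seg: "reachable ?S ?G (c a) (c b)" if "a \<le> b" "b < L" "z < a \<or> b < z" for a b
    proof (rule fwd)
      show "a \<le> b" by fact
      show "\<forall>k. a \<le> k \<and> k \<le> b \<longrightarrow> c k \<in> ?S"
      proof (intro allI impI)
        fix k assume "a \<le> k \<and> k \<le> b"
        then have "k < L" "k \<noteq> z" using that by auto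
        then show "c k \<in> ?S" by (rule inS)
      qed
      show "\<forall>k. a \<le> k \<and> k < b \<longrightarrow> ?G (c k) (c (Suc k))"
      proof (intro allI impI)
        fix k assume "a \<le> k \<and> k < b"
        then have "Suc k < L" "k \<noteq> z" "Suc k \<noteq> z" using that by auto
        then show "?G (c k) (c (Suc k))" by (rule Gstep)
      qed
    qed
    obtain base where base: "base \<in> ?S" "\<And>k. k < L \<Longrightarrow> k \<noteq> z \<Longrightarrow> reachable ?S ?G (c k) base"
    proof (cases "z = 0")
      case True
      have "reachable ?S ?G (c k) (c 1)" if "k < L" "k \<noteq> z" for k
      proof -
        have "1 \<le> k" "z < 1" using that True by auto
        then have "reachable ?S ?G (c 1) (c k)" using seg[of 1 k] that by simp
        then show ?thesis by (rule rsym)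
      qed
      moreover have "c 1 \<in> ?S" using inS[of 1] L True by simp
      ultimately show ?thesis using that by blast
    next
      case False
      have "reachable ?S ?G (c k) (c 0)" if "k < L" "k \<noteq> z" for k
      proof (cases "k < z")
        case True
        have "reachable ?S ?G (c 0) (c k)" using seg[of 0 k] that True by simp
        then show ?thesis by (rule rsym)
      next
        case False
        then have kz: "z < k" using that by simp
        have "reachable ?S ?G (c k) (c (L - 1))" using seg[of k "L - 1"] that kz by simp
        moreover have "reachable ?S ?G (c (L - 1)) (c 0)"
        proof (rule reach_step)
          have l: "L - 1 < L" "L - 1 \<noteq> z" "0 < L" "0 \<noteq> z" using kz that L \<open>z \<noteq> 0\<close> by auto
          show "c (L - 1) \<in> ?S" using inS l by simp
          show "c 0 \<in> ?S" using inS l by simp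
          have "c (L - 1) \<noteq> c z" "c 0 \<noteq> c z" using inS l by auto
          then show "?G (c (L - 1)) (c 0)"
            unfolding del_vertex_def using cyc_rel_last[of c L] by simp
        qed
        ultimately show ?thesis by (rule reach_trans)
      qed
      moreover have "c 0 \<in> ?S" using inS[of 0] False L by simp
      ultimately show ?thesis using that by blast
    qed
    have allr: "reachable ?S ?G x y" if xy: "x \<in> ?S" "y \<in> ?S" for x y
    proof -
      obtain i where i: "i < L" "x = c i" using xy by blast
      obtain j where j: "j < L" "y = c j" using xy by blast
      have "i \<noteq> z" "j \<noteq> z" using i j xy by auto
      then have "reachable ?S ?G x base" "reachable ?S ?G y base" using base(2) i j by auto
      then show ?thesis using reach_trans rsym by metis
    qed
    have "\<exists>x\<in>?S. \<exists>y\<in>?S. reachable ?W ?F x y \<and> \<not> reachable ?S ?G x y"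
      using cv unfolding cut_vertex_def z by simp
    then show False using allr by blast
  qed
  show ?thesis using sub conn nocut unfolding biconnected_def by blast
qed


lemma cyc_simple: "is_cycle_graph W F \<Longrightarrow> simple_graph W F"
  unfolding is_cycle_graph_def by simp

lemma sg_props:
  assumes "simple_graph V E" "E u w"
  shows "u \<in> V" "w \<in> V" "u \<noteq> w" "E w u"
  using assms unfolding simple_graph_def by blast+

lemma two_nbrs:
  assumes cyc: "is_cycle_graph W F" and x: "x \<in> W" and p: "F x p" and q: "F x q" and pq: "p \<noteq> q"
  shows "{w \<in> W. F x w} = {p, q}"
proof -
  have sg: "simple_graph W F" using cyc by (rule cyc_simple)
  have fin: "finite {w \<in> W. F x w}" using sg unfolding simple_graph_def by simp
  have c: "card {w \<in> W. F x w} = 2" using cyc x unfolding is_cycle_graph_def degree_def by simp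
  have sub: "{p, q} \<subseteq> {w \<in> W. F x w}" using sg_props[OF sg p] sg_props[OF sg q] p q by simp
  have "card {p, q} = 2" using pq by simp
  then show ?thesis using card_subset_eq[OF fin sub] c by simp
qed

lemma cyc_na:
  assumes cyc: "is_cycle_graph W F" and c4: "4 \<le> card W"
    and ua: "F u a" and ub: "F u b" and ab: "a \<noteq> b"
  shows "\<not> F a b"
proof
  assume fab: "F a b"
  have sg: "simple_graph W F" using cyc by (rule cyc_simple)
  note s1 = sg_props[OF sg ua] and s2 = sg_props[OF sg ub] and s3 = sg_props[OF sg fab]
  have Nu: "{w \<in> W. F u w} = {a, b}" using two_nbrs[OF cyc s1(1) ua ub ab] .
  have Na: "{w \<in> W. F a w} = {u, b}" using two_nbrs[OF cyc s1(2) s1(4) fab] s2(3) by simp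
  have Nb: "{w \<in> W. F b w} = {u, a}" using two_nbrs[OF cyc s2(2) s2(4) s3(4)] s1(3) by simp
  let ?T = "{u, a, b}"
  have cl: "z \<in> ?T" if "y \<in> ?T" "z \<in> W" "F y z" for y z
  proof -
    from that(1) consider "y = u" | "y = a" | "y = b" by blast
    then show ?thesis
    proof cases
      case 1 then have "z \<in> {w \<in> W. F u w}" using that by simp
      then show ?thesis using Nu by blast
    next
      case 2 then have "z \<in> {w \<in> W. F a w}" using that by simp
      then show ?thesis using Na by blast
    next
      case 3 then have "z \<in> {w \<in> W. F b w}" using that by simp
      then show ?thesis using Nb by blast
    qed
  qed
  have "w \<in> ?T" if "w \<in> W" for w
  proof -
    have "reachable W F u w" using cyc s1(1) that unfolding is_cycle_graph_def connected_graph_def by simp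
    then have "(\<lambda>x y. x \<in> W \<and> y \<in> W \<and> F x y)\<^sup>*\<^sup>* u w" unfolding reachable_def by simp
    then show ?thesis
    proof (induction rule: rtranclp_induct)
      case base then show ?case by simp
    next
      case (step y z) then show ?case using cl by blast
    qed
  qed
  then have "W \<subseteq> ?T" by blast
  then have "card W \<le> card ?T" by (simp add: card_mono)
  also have "card ?T \<le> 3" by (simp add: card_insert_le_m1)
  finally show False using c4 by simp
qed

lemma cyc_card4:
  assumes cyc: "is_cycle_graph W F" and ua: "F u a" and ub: "F u b" and ab: "a \<noteq> b" and nab: "\<not> F a b"
  shows "4 \<le> card W"
proof (rule ccontr)
  assume "\<not> 4 \<le> card W"
  moreover have "3 \<le> card W" using cyc unfolding is_cycle_graph_def by simp
  ultimately have c3: "card W = 3" by simp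
  have sg: "simple_graph W F" using cyc by (rule cyc_simple)
  have fin: "finite W" using sg unfolding simple_graph_def by simp
  note s1 = sg_props[OF sg ua] and s2 = sg_props[OF sg ub]
  have sub: "{u, a, b} \<subseteq> W" using s1 s2 by simp
  have "card {u, a, b} = 3" using s1(3) s2(3) ab by simp
  then have W: "W = {u, a, b}" using card_subset_eq[OF fin sub] c3 by simp
  have "{w \<in> W. F a w} \<subseteq> {u, b}"
  proof
    fix w assume "w \<in> {w \<in> W. F a w}"
    then have "w \<in> W" "F a w" by auto
    moreover have "a \<noteq> w" using sg_props[OF sg \<open>F a w\<close>] by simp
    ultimately show "w \<in> {u, b}" using W by auto
  qed
  moreover have "card {w \<in> W. F a w} = 2" using cyc s1(2) unfolding is_cycle_graph_def degree_def by simp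
  moreover have "card {u, b} = 2" using s2(3) by simp
  ultimately have "{w \<in> W. F a w} = {u, b}" using card_subset_eq[of "{u, b}"] by simp
  then have "b \<in> {w \<in> W. F a w}" by simp
  then show False using nab by simp
qed

lemma cyc3_complete:
  assumes cyc: "is_cycle_graph W F" and c3: "card W = 3"
  shows "is_complete_graph W F"
  unfolding is_complete_graph_def
proof (intro conjI ballI impI)
  have sg: "simple_graph W F" using cyc by (rule cyc_simple)
  then show "simple_graph W F" .
  fix x y assume x: "x \<in> W" and y: "y \<in> W" and xy: "x \<noteq> y"
  have fin: "finite W" using sg unfolding simple_graph_def by simp
  have sub: "{w \<in> W. F x w} \<subseteq> W - {x}"
  proof
    fix w assume "w \<in> {w \<in> W. F x w}"
    then have "w \<in> W" "F x w" by auto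
    then show "w \<in> W - {x}" using sg_props(3)[OF sg \<open>F x w\<close>] by simp
  qed
  have "card {w \<in> W. F x w} = 2" using cyc x unfolding is_cycle_graph_def degree_def by simp
  moreover have "card (W - {x}) = 2" using c3 x fin by simp
  ultimately have "{w \<in> W. F x w} = W - {x}" using card_subset_eq[OF _ sub] fin by simp
  then show "F x y" using y xy by blast
qed


lemma opo_props:
  assumes "one_perfect_orientation V E D"
  shows "\<And>u w. D u w \<Longrightarrow> E u w" "\<And>u w. E u w \<Longrightarrow> D u w \<or> D w u" "\<And>u w. D u w \<Longrightarrow> \<not> D w u"
    "\<And>v x y. v \<in> V \<Longrightarrow> D v x \<Longrightarrow> D v y \<Longrightarrow> x \<noteq> y \<Longrightarrow> E x y"
  using assms unfolding one_perfect_orientation_def orientation_def by blast+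

lemma subgraph_props:
  assumes "subgraph W F V E"
  shows "simple_graph W F" "W \<subseteq> V" "\<And>u w. F u w \<Longrightarrow> E u w"
  using assms unfolding subgraph_def by blast+

lemma tri_bic:
  assumes sg: "simple_graph V E" and e: "E a b" "E b d" "E d a"
  shows "subgraph {a, b, d} (cyc_rel (\<lambda>i. if i = 0 then a else if i = 1 then b else d) 3) V E
    \<and> biconnected {a, b, d} (cyc_rel (\<lambda>i. if i = 0 then a else if i = 1 then b else d) 3)"
proof -
  define c where "c = (\<lambda>i::nat. if i = 0 then a else if i = 1 then b else d)"
  have ne: "a \<noteq> b" "b \<noteq> d" "d \<noteq> a" using sg_props(3)[OF sg] e by auto
  have L3: "{..<3::nat} = {0, 1, 2}" by auto
  have img: "c ` {..<3} = {a, b, d}" unfolding L3 c_def by auto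
  have inj: "inj_on c {..<3}" unfolding L3 inj_on_def c_def using ne by auto
  have inV: "\<forall>i<3. c i \<in> V" using sg_props(1,2)[OF sg e(1)] sg_props(2)[OF sg e(2)] by (auto simp: c_def)
  have edges: "\<forall>i. Suc i < 3 \<longrightarrow> E (c i) (c (Suc i))"
  proof (intro allI impI)
    fix i :: nat assume "Suc i < 3"
    then have "i = 0 \<or> i = 1" by auto
    then show "E (c i) (c (Suc i))" using e by (auto simp: c_def)
  qed
  have last: "E (c (3 - 1)) (c 0)" using e by (simp add: c_def)
  from cycle_bic[OF _ inj sg inV edges last] img show ?thesis unfolding c_def by simp
qed

lemma cycle_out:
  assumes sg: "simple_graph V E" and blk: "is_block V E W F" and cyc: "is_cycle_graph W F"
    and c4: "4 \<le> card W" and opo: "one_perfect_orientation V E D" and u: "u \<in> W"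
  shows "\<exists>w. F u w \<and> D u w"
proof -
  note o = opo_props[OF opo]
  have sub: "subgraph W F V E" using blk by (rule block_subgraph)
  note sp = subgraph_props[OF sub]
  have sgW: "simple_graph W F" using sp(1) .
  have finW: "finite W" using sgW unfolding simple_graph_def by simp
  have out1: "a = b" if "x \<in> W" "F x a" "F x b" "D x a" "D x b" for x a b
  proof (rule ccontr)
    assume ab: "a \<noteq> b"
    have "x \<in> V" using sp(2) that(1) by blast
    then have "E a b" using o(4) that ab by blast
    moreover have "a \<in> W" "b \<in> W" using sg_props[OF sgW that(2)] sg_props[OF sgW that(3)] by simp_all
    ultimately have "F a b" using block_edge[OF sg blk] by blast
    then show False using cyc_na[OF cyc c4 that(2,3) ab] by simp
  qed
  define A where "A = Sigma W (\<lambda>x. {w \<in> W. F x w})"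
  define Dp where "Dp = {p \<in> A. D (fst p) (snd p)}"
  have finA: "finite A" unfolding A_def using finW by simp
  have cardA: "card A = 2 * card W"
  proof -
    have "card A = (\<Sum>x\<in>W. card {w \<in> W. F x w})" unfolding A_def using finW by simp
    also have "\<dots> = (\<Sum>x\<in>W. 2)"
      using cyc unfolding is_cycle_graph_def degree_def by (intro sum.cong) auto
    finally show ?thesis by simp
  qed
  have Aeq: "A = Dp \<union> prod.swap ` Dp"
  proof
    show "A \<subseteq> Dp \<union> prod.swap ` Dp"
    proof
      fix p assume "p \<in> A"
      then obtain x w where p: "p = (x, w)" "x \<in> W" "w \<in> W" "F x w" unfolding A_def by blast
      have "E x w" using sp(3) p(4) .
      then consider "D x w" | "D w x" using o(2) by blast
      then show "p \<in> Dp \<union> prod.swap ` Dp"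
      proof cases
        case 1 then show ?thesis using p \<open>p \<in> A\<close> unfolding Dp_def by simp
      next
        case 2
        have "F w x" using sg_props(4)[OF sgW p(4)] .
        then have "(w, x) \<in> Dp" using 2 p unfolding Dp_def A_def by simp
        moreover have "p = prod.swap (w, x)" using p by simp
        ultimately show ?thesis by blast
      qed
    qed
  next
    show "Dp \<union> prod.swap ` Dp \<subseteq> A"
    proof
      fix p assume "p \<in> Dp \<union> prod.swap ` Dp"
      then consider "p \<in> Dp" | q where "q \<in> Dp" "p = prod.swap q" by blast
      then show "p \<in> A"
      proof cases
        case 1 then show ?thesis unfolding Dp_def by simp
      next
        case 2
        obtain x w where q: "q = (x, w)" by (cases q)
        have "x \<in> W" "w \<in> W" "F x w" using 2 q unfolding Dp_def A_def by auto
        then show ?thesis using 2 q sg_props(4)[OF sgW \<open>F x w\<close>] unfolding A_def by simp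
      qed
    qed
  qed
  have disj: "Dp \<inter> prod.swap ` Dp = {}"
  proof (rule ccontr)
    assume "Dp \<inter> prod.swap ` Dp \<noteq> {}"
    then obtain q where q: "q \<in> Dp" "prod.swap q \<in> Dp" by auto
    obtain x w where "q = (x, w)" by (cases q)
    then have "D x w" "D w x" using q unfolding Dp_def by auto
    then show False using o(3) by blast
  qed
  have finDp: "finite Dp" using finA unfolding Dp_def by simp
  have "card A = card Dp + card (prod.swap ` Dp)"
    unfolding Aeq using finDp disj by (simp add: card_Un_disjoint)
  also have "card (prod.swap ` Dp) = card Dp" by (rule card_image) simp
  finally have cDp: "card Dp = card W" using cardA by simp
  have injf: "inj_on fst Dp"
  proof (rule inj_onI)
    fix p q assume pq: "p \<in> Dp" "q \<in> Dp" "fst p = fst q"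
    obtain x a where p: "p = (x, a)" by (cases p)
    obtain y b where q: "q = (y, b)" by (cases q)
    have "x \<in> W" "F x a" "F x b" "D x a" "D x b" using pq p q unfolding Dp_def A_def by auto
    then have "a = b" by (rule out1)
    then show "p = q" using p q pq by simp
  qed
  have "fst ` Dp \<subseteq> W" unfolding Dp_def A_def by auto
  moreover have "card (fst ` Dp) = card W" using card_image[OF injf] cDp by simp
  ultimately have "fst ` Dp = W" using card_subset_eq[OF finW] by blast
  then obtain p where "p \<in> Dp" "fst p = u" using u by blast
  then show ?thesis unfolding Dp_def A_def by (cases p) auto
qed

lemma cycle_end:
  assumes sg: "simple_graph V E" and blk: "is_block V E W F" and cyc: "is_cycle_graph W F"
    and c4: "4 \<le> card W" and opo: "one_perfect_orientation V E D" and u: "u \<in> W"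
    and x: "x \<notin> W" and ux: "E u x"
  shows "D x u"
proof (rule ccontr)
  assume nd: "\<not> D x u"
  note o = opo_props[OF opo]
  have dux: "D u x" using o(2)[OF ux] nd by blast
  obtain a where a: "F u a" "D u a" using cycle_out[OF sg blk cyc c4 opo u] by blast
  have sub: "subgraph W F V E" using blk by (rule block_subgraph)
  note sp = subgraph_props[OF sub]
  have aW: "a \<in> W" using sg_props(2)[OF sp(1) a(1)] .
  have ua: "u \<noteq> a" using sg_props(3)[OF sp(1) a(1)] .
  have "a \<noteq> x" using aW x by blast
  moreover have "u \<in> V" using sp(2) u by blast
  ultimately have eax: "E a x" using o(4) a(2) dux by blast
  have eua: "E u a" using sp(3)[OF a(1)] .
  have exu: "E x u" using sg_props(4)[OF sg ux] .
  note t = tri_bic[OF sg eua eax exu]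
  have "{u, a, x} \<subseteq> W"
    using block_absorb[OF blk conjunct1[OF t] conjunct2[OF t], of u a] u aW ua by simp
  then show False using x by simp
qed


lemma block_bic: "is_block V E W F \<Longrightarrow> biconnected W F"
  unfolding is_block_def by blast

lemma walk_short_eq_ex:
  "walk E p n \<Longrightarrow> a < b \<Longrightarrow> b \<le> n \<Longrightarrow> p a = p b \<Longrightarrow>
    \<exists>q. walk E q (n - (b - a)) \<and> q 0 = p 0 \<and> q (n - (b - a)) = p n"
  by (rule exI, rule walk_shortcut_eq)

lemma walk_short_edge_ex:
  "walk E p n \<Longrightarrow> a < b \<Longrightarrow> b \<le> n \<Longrightarrow> E (p a) (p b) \<Longrightarrow>
    \<exists>q. walk E q (n - (b - a) + 1) \<and> q 0 = p 0 \<and> q (n - (b - a) + 1) = p n"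
  by (rule exI, rule walk_shortcut_edge)

lemma switch_point:
  fixes f :: "nat \<Rightarrow> bool"
  shows "\<not> f 0 \<Longrightarrow> f m \<Longrightarrow> \<exists>j<m. \<not> f j \<and> f (Suc j)"
proof (induction m)
  case 0 then show ?case by simp
next
  case (Suc m)
  show ?case
  proof (cases "f m")
    case True
    then obtain j where "j < m" "\<not> f j \<and> f (Suc j)" using Suc by blast
    then show ?thesis by (intro exI[of _ j]) simp
  next
    case False
    then show ?thesis using Suc.prems(2) by (intro exI[of _ m]) simp
  qed
qed

lemma fwd_dir:
  assumes sg: "simple_graph V E" and conn: "connected_graph V E" and opo: "one_perfect_orientation V E D"
    and b1: "is_block V E W1 F1" "is_cycle_graph W1 F1" "4 \<le> card W1"
    and b2: "is_block V E W2 F2" "is_cycle_graph W2 F2" "4 \<le> card W2"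
  shows "W1 = W2 \<and> F1 = F2"
proof -
  note o = opo_props[OF opo]
  note sp1 = subgraph_props[OF block_subgraph[OF b1(1)]]
  note sp2 = subgraph_props[OF block_subgraph[OF b2(1)]]
  have eq_if: "W1 = W2 \<and> F1 = F2" if "v \<in> W1" "v \<in> W2" "b \<in> W1" "b \<in> W2" "v \<noteq> b" for v b
  proof -
    have "W2 \<subseteq> W1 \<and> (\<forall>u w. F2 u w \<longrightarrow> F1 u w)"
      using block_absorb[OF b1(1) block_subgraph[OF b2(1)] block_bic[OF b2(1)], of v b] that
      by simp
    moreover have "W1 \<subseteq> W2 \<and> (\<forall>u w. F1 u w \<longrightarrow> F2 u w)"
      using block_absorb[OF b2(1) block_subgraph[OF b1(1)] block_bic[OF b1(1)], of v b] that
      by simp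
    ultimately show ?thesis by (auto simp: fun_eq_iff)
  qed
  show ?thesis
  proof (cases "W1 \<inter> W2 = {}")
    case False
    then obtain v where v: "v \<in> W1" "v \<in> W2" by blast
    obtain b where b: "F2 v b" "D v b" using cycle_out[OF sg b2 opo v(2)] by blast
    have bW2: "b \<in> W2" and vb: "v \<noteq> b" using sg_props[OF sp2(1) b(1)] by simp_all
    have "b \<in> W1"
    proof (rule ccontr)
      assume "b \<notin> W1"
      then have "D b v" using cycle_end[OF sg b1 opo v(1) _ sp2(3)[OF b(1)]] by blast
      then show False using o(3) b(2) by blast
    qed
    then show ?thesis using eq_if[OF v _ bW2 vb] by blast
  next
    case True
    define P where "P = (\<lambda>n. \<exists>p. p 0 \<in> W1 \<and> p n \<in> W2 \<and> walk E p n)"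
    have "W1 \<noteq> {}" using b1(3) by auto
    then obtain w1 where w1: "w1 \<in> W1" by blast
    have "W2 \<noteq> {}" using b2(3) by auto
    then obtain w2 where w2: "w2 \<in> W2" by blast
    have w1V: "w1 \<in> V" using sp1(2) w1 by blast
    have w2V: "w2 \<in> V" using sp2(2) w2 by blast
    have "reachable V E w1 w2" using conn_reach[OF conn w1V w2V] .
    then obtain p0 n0 where "p0 0 = w1" "p0 n0 = w2" "walk E p0 n0" using reach_walk[of V E w1 w2] by blast
    then have "P n0" unfolding P_def using w1 w2 by blast
    then obtain n where Pn: "P n" and minn: "\<And>m. m < n \<Longrightarrow> \<not> P m"
      using exists_least_iff[of P] by blast
    then obtain p where p: "p 0 \<in> W1" "p n \<in> W2" "walk E p n" unfolding P_def by blast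
    have n0: "n \<noteq> 0" using p True by (cases "n = 0") auto
    have edge: "E (p i) (p (Suc i))" if "i < n" for i using p(3) that unfolding walk_def by blast
    have nW1: "p i \<notin> W1" if "1 \<le> i" "i \<le> n" for i
    proof
      assume "p i \<in> W1"
      have "walk E (\<lambda>j. p (j + i)) (n - i)" using walk_suffix[OF p(3) that(2)] .
      moreover have "p (n - i + i) \<in> W2" using p(2) that by simp
      ultimately have "P (n - i)" unfolding P_def using \<open>p i \<in> W1\<close> by (intro exI[of _ "\<lambda>j. p (j + i)"]) simp
      moreover have "n - i < n" using that by simp
      ultimately show False using minn by blast
    qed
    have nW2: "p i \<notin> W2" if "i < n" for i
    proof
      assume "p i \<in> W2"
      have "walk E p i" using walk_prefix[OF p(3)] that by simp
      then have "P i" unfolding P_def using p(1) \<open>p i \<in> W2\<close> by blast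
      then show False using minn that by blast
    qed
    have d0: "D (p 1) (p 0)"
      using cycle_end[OF sg b1 opo p(1) nW1[of 1]] edge[of 0] n0 by simp
    have dn: "D (p (n - 1)) (p n)"
    proof -
      have "E (p (n - 1)) (p n)" using edge[of "n - 1"] n0 by simp
      then have "E (p n) (p (n - 1))" by (rule sg_props(4)[OF sg])
      then show ?thesis using cycle_end[OF sg b2 opo p(2) nW2[of "n - 1"]] n0 by simp
    qed
    define f where "f = (\<lambda>j. D (p j) (p (Suc j)))"
    have "\<not> f 0" using d0 o(3) unfolding f_def by simp
    moreover have "f (n - 1)" using dn n0 unfolding f_def by simp
    ultimately obtain j where j: "j < n - 1" "\<not> f j" "f (Suc j)" using switch_point[of f] by blast
    have jn: "Suc (Suc j) \<le> n" using j(1) by simp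
    have d1: "D (p (Suc j)) (p j)" using o(2)[OF edge[of j]] j jn unfolding f_def by auto
    have d2: "D (p (Suc j)) (p (Suc (Suc j)))" using j(3) unfolding f_def by simp
    have False
    proof (cases "p j = p (Suc (Suc j))")
      case True
      have "j < Suc (Suc j)" by simp
      have two: "Suc (Suc j) - j = 2" by simp
      obtain q where "walk E q (n - 2)" "q 0 = p 0" "q (n - 2) = p n"
        using walk_short_eq_ex[OF p(3) \<open>j < Suc (Suc j)\<close> jn True] unfolding two by blast
      then have "P (n - 2)" unfolding P_def using p(1,2) by (intro exI[of _ q]) simp
      then show False using minn n0 by simp
    next
      case False
      have "p (Suc j) \<in> V" using sg_props(1)[OF sg edge[of "Suc j"]] jn by simp
      then have e: "E (p j) (p (Suc (Suc j)))" using o(4) d1 d2 False by blast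
      have "j < Suc (Suc j)" by simp
      have two: "Suc (Suc j) - j = 2" by simp
      obtain q where "walk E q (n - 2 + 1)" "q 0 = p 0" "q (n - 2 + 1) = p n"
        using walk_short_edge_ex[OF p(3) \<open>j < Suc (Suc j)\<close> jn e] unfolding two by blast
      then have "P (n - 2 + 1)" unfolding P_def using p(1,2) by (intro exI[of _ q]) simp
      moreover have "n - 2 + 1 < n" using jn by simp
      ultimately show False using minn by blast
    qed
    then show ?thesis by simp
  qed
qed


definition good_or :: "'a set \<Rightarrow> ('a \<Rightarrow> 'a \<Rightarrow> bool) \<Rightarrow> ('a \<Rightarrow> 'a \<Rightarrow> bool) \<Rightarrow> bool" where
  "good_or V E D \<longleftrightarrow> orientation V E D \<and> (\<forall>u a b. D u a \<and> D u b \<longrightarrow> a = b)"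

lemma good_or_props:
  assumes "good_or V E D"
  shows "\<And>u w. D u w \<Longrightarrow> E u w" "\<And>u w. E u w \<Longrightarrow> D u w \<or> D w u"
    "\<And>u w. D u w \<Longrightarrow> \<not> D w u" "\<And>u a b. D u a \<Longrightarrow> D u b \<Longrightarrow> a = b"
  using assms unfolding good_or_def orientation_def by blast+

lemma good_orI:
  assumes "\<And>u w. D u w \<Longrightarrow> E u w" "\<And>u w. E u w \<Longrightarrow> D u w \<or> D w u"
    "\<And>u w. D u w \<Longrightarrow> \<not> D w u" "\<And>u a b. D u a \<Longrightarrow> D u b \<Longrightarrow> a = b"
  shows "good_or V E D"
  using assms unfolding good_or_def orientation_def by blast

lemma del_simple: "simple_graph V E \<Longrightarrow> simple_graph (V - {z}) (del_vertex z E)"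
  unfolding simple_graph_def del_vertex_def by blast

lemma del_nbrs: "y \<noteq> z \<Longrightarrow> {w \<in> V - {z}. del_vertex z E y w} = {w \<in> V. E y w} - {z}"
  unfolding del_vertex_def by auto

lemma del_degree_le:
  assumes "finite V" "y \<noteq> z"
  shows "degree (V - {z}) (del_vertex z E) y \<le> degree V E y"
  unfolding degree_def del_nbrs[OF assms(2)] using assms(1) by (simp add: card_mono)

lemma nbrs_finite: "finite V \<Longrightarrow> finite {w \<in> V. E y w}" by simp

lemma deg2_orient:
  "\<forall>V E. card V = n \<longrightarrow> finite V \<longrightarrow> simple_graph V E \<longrightarrow> (\<forall>u\<in>V. degree V E u \<le> 2) \<longrightarrow>
     (\<forall>z\<in>V. degree V E z \<le> 1 \<longrightarrow> (\<exists>D. good_or V E D \<and> (\<forall>w. \<not> D z w))) \<and> (\<exists>D. good_or V E D)"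
proof (induction n rule: less_induct)
  case (less n)
  show ?case
  proof (intro allI impI)
    fix V :: "'a set" and E :: "'a \<Rightarrow> 'a \<Rightarrow> bool"
    assume cV: "card V = n" and finV: "finite V" and sg: "simple_graph V E" and deg: "\<forall>u\<in>V. degree V E u \<le> 2"
    have Esym: "E w u" if "E u w" for u w using sg_props(4)[OF sg that] .
    have Eirr: "u \<noteq> w" if "E u w" for u w using sg_props(3)[OF sg that] .
    have EV: "u \<in> V" "w \<in> V" if "E u w" for u w using sg_props(1,2)[OF sg that] by simp_all
    have IH: "(\<forall>z'\<in>V - {z}. degree (V - {z}) (del_vertex z E) z' \<le> 1 \<longrightarrow>
               (\<exists>D. good_or (V - {z}) (del_vertex z E) D \<and> (\<forall>w. \<not> D z' w)))
             \<and> (\<exists>D. good_or (V - {z}) (del_vertex z E) D)" if z: "z \<in> V" for z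
    proof -
      have "card V > 0" using finV z card_gt_0_iff by blast
      then have "card (V - {z}) < n" using cV finV z by simp
      moreover have "finite (V - {z})" using finV by simp
      moreover have "simple_graph (V - {z}) (del_vertex z E)" using del_simple[OF sg] .
      moreover have "\<forall>u\<in>V - {z}. degree (V - {z}) (del_vertex z E) u \<le> 2"
      proof
        fix u assume u: "u \<in> V - {z}"
        then have "degree (V - {z}) (del_vertex z E) u \<le> degree V E u" using del_degree_le[OF finV, of u z] by simp
        then show "degree (V - {z}) (del_vertex z E) u \<le> 2" using deg u by fastforce
      qed
      ultimately show ?thesis using less.IH by blast
    qed
    have S': "\<exists>D. good_or V E D \<and> (\<forall>w. \<not> D z w)" if z: "z \<in> V" "degree V E z \<le> 1" for z
    proof -
      let ?V' = "V - {z}" and ?E' = "del_vertex z E"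
      have finN: "finite {w \<in> V. E z w}" using finV by simp
      have cN: "card {w \<in> V. E z w} \<le> 1" using z(2) unfolding degree_def .
      show ?thesis
      proof (cases "{w \<in> V. E z w} = {}")
        case True
        then have noz: "\<not> E z w" for w using EV by blast
        obtain D' where D': "good_or ?V' ?E' D'" using IH[OF z(1)] by blast
        note o = good_or_props[OF D']
        have "good_or V E D'"
        proof (rule good_orI)
          fix u w assume "D' u w" then show "E u w" using o(1) unfolding del_vertex_def by blast
        next
          fix u w assume e: "E u w"
          have "u \<noteq> z" using noz e by blast
          moreover have "w \<noteq> z" using noz Esym[OF e] by blast
          ultimately have "?E' u w" using e unfolding del_vertex_def by simp
          then show "D' u w \<or> D' w u" by (rule o(2))
        next
          fix u w assume "D' u w" then show "\<not> D' w u" by (rule o(3))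
        next
          fix u a b assume "D' u a" "D' u b" then show "a = b" by (rule o(4))
        qed
        moreover have "\<forall>w. \<not> D' z w" using o(1) unfolding del_vertex_def by blast
        ultimately have "good_or V E D' \<and> (\<forall>w. \<not> D' z w)" by blast
        then show ?thesis by blast
      next
        case False
        then obtain y where y: "y \<in> {w \<in> V. E z w}" by blast
        have "\<forall>a1\<in>{w \<in> V. E z w}. \<forall>a2\<in>{w \<in> V. E z w}. a1 = a2"
          using cN card_le_Suc0_iff_eq[OF finN] by simp
        then have Nz: "{w \<in> V. E z w} = {y}" using y by blast
        then have zy: "E z y" "y \<in> V" by auto
        have yz: "y \<noteq> z" using Eirr zy(1) by blast
        have onlyy: "w = y" if "E z w" for w using Nz EV[OF that] that by blast
        have degy: "degree ?V' ?E' y \<le> 1"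
        proof -
          have "degree ?V' ?E' y = card ({w \<in> V. E y w} - {z})" unfolding degree_def del_nbrs[OF yz] ..
          also have "\<dots> = card {w \<in> V. E y w} - 1" using Esym[OF zy(1)] z(1) finV by simp
          also have "\<dots> \<le> 1" using deg zy(2) unfolding degree_def by fastforce
          finally show ?thesis .
        qed
        obtain D' where D': "good_or ?V' ?E' D'" "\<forall>w. \<not> D' y w"
          using IH[OF z(1)] degy zy(2) yz by blast
        define D where "D = (\<lambda>u w. D' u w \<or> (u = y \<and> w = z))"
        have o1: "\<And>u w. D' u w \<Longrightarrow> ?E' u w" and o2: "\<And>u w. ?E' u w \<Longrightarrow> D' u w \<or> D' w u"
          and o3: "\<And>u w. D' u w \<Longrightarrow> \<not> D' w u" and o4: "\<And>u a b. D' u a \<Longrightarrow> D' u b \<Longrightarrow> a = b"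
          using D'(1) unfolding good_or_def orientation_def by blast+
        have nz: "u \<noteq> z" "w \<noteq> z" if "D' u w" for u w using o1[OF that] unfolding del_vertex_def by simp_all
        have "orientation V E D"
          unfolding orientation_def
        proof (intro conjI allI impI)
          fix u w assume "D u w"
          then show "E u w" using o1 Esym[OF zy(1)] unfolding D_def del_vertex_def by blast
        next
          fix u w assume e: "E u w"
          show "D u w \<or> D w u"
          proof (cases "u = z \<or> w = z")
            case True
            then show ?thesis using onlyy e Esym unfolding D_def by blast
          next
            case False
            then have "?E' u w" using e unfolding del_vertex_def by simp
            then show ?thesis using o2 unfolding D_def by blast
          qed
        next
          fix u w assume "D u w"
          then show "\<not> D w u" using o3 nz yz unfolding D_def by blast
        qed
        moreover have "\<forall>u a b. D u a \<and> D u b \<longrightarrow> a = b"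
          using o4 D'(2) unfolding D_def by blast
        moreover have "\<forall>w. \<not> D z w" using nz yz unfolding D_def by blast
        ultimately show ?thesis unfolding good_or_def by blast
      qed
    qed
    have S: "\<exists>D. good_or V E D"
    proof (cases "\<exists>z\<in>V. degree V E z \<le> 1")
      case True
      then show ?thesis using S' by blast
    next
      case False
      show ?thesis
      proof (cases "V = {}")
        case True
        have "good_or V E (\<lambda>_ _. False)" unfolding good_or_def orientation_def using EV True by blast
        then show ?thesis by blast
      next
        case nonempty: False
        then obtain u where u: "u \<in> V" by blast
        have deg2: "degree V E x = 2" if "x \<in> V" for x using deg False that by fastforce
        have "card {w \<in> V. E u w} = 2" using deg2[OF u] unfolding degree_def .
        then obtain a b where Nu: "{w \<in> V. E u w} = {a, b}" and ab: "a \<noteq> b" by (auto simp: card_2_iff)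
        then have ua: "E u a" "a \<in> V" and ub: "E u b" "b \<in> V" by auto
        have only: "w = a \<or> w = b" if "E u w" for w using Nu EV[OF that] that by blast
        have bu: "b \<noteq> u" and au: "a \<noteq> u" using Eirr ua(1) ub(1) by blast+
        let ?V' = "V - {u}" and ?E' = "del_vertex u E"
        have degb: "degree ?V' ?E' b \<le> 1"
        proof -
          have "degree ?V' ?E' b = card ({w \<in> V. E b w} - {u})" unfolding degree_def del_nbrs[OF bu] ..
          also have "\<dots> = card {w \<in> V. E b w} - 1" using Esym[OF ub(1)] u finV by simp
          also have "\<dots> \<le> 1" using deg2[OF ub(2)] unfolding degree_def by simp
          finally show ?thesis .
        qed
        obtain D' where D': "good_or ?V' ?E' D'" "\<forall>w. \<not> D' b w"
          using IH[OF u] degb ub(2) bu by blast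
        define D where "D = (\<lambda>x w. D' x w \<or> (x = u \<and> w = a) \<or> (x = b \<and> w = u))"
        have o1: "\<And>x w. D' x w \<Longrightarrow> ?E' x w" and o2: "\<And>x w. ?E' x w \<Longrightarrow> D' x w \<or> D' w x"
          and o3: "\<And>x w. D' x w \<Longrightarrow> \<not> D' w x" and o4: "\<And>x c d. D' x c \<Longrightarrow> D' x d \<Longrightarrow> c = d"
          using D'(1) unfolding good_or_def orientation_def by blast+
        have nu: "x \<noteq> u" "w \<noteq> u" if "D' x w" for x w using o1[OF that] unfolding del_vertex_def by simp_all
        have "orientation V E D"
          unfolding orientation_def
        proof (intro conjI allI impI)
          fix x w assume "D x w"
          then show "E x w" using o1 ua(1) Esym[OF ub(1)] unfolding D_def del_vertex_def by blast
        next
          fix x w assume e: "E x w"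
          show "D x w \<or> D w x"
          proof (cases "x = u \<or> w = u")
            case True
            then show ?thesis using only e Esym unfolding D_def by blast
          next
            case False
            then have "?E' x w" using e unfolding del_vertex_def by simp
            then show ?thesis using o2 unfolding D_def by blast
          qed
        next
          fix x w assume "D x w"
          then show "\<not> D w x" using o3 nu ab au bu unfolding D_def by blast
        qed
        moreover have "\<forall>x c d. D x c \<and> D x d \<longrightarrow> c = d"
          using o4 D'(2) nu bu unfolding D_def by blast
        ultimately show ?thesis unfolding good_or_def by blast
      qed
    qed
    show "(\<forall>z\<in>V. degree V E z \<le> 1 \<longrightarrow> (\<exists>D. good_or V E D \<and> (\<forall>w. \<not> D z w))) \<and> (\<exists>D. good_or V E D)"
      using S' S by blast
  qed
qed


lemma good_opo: "good_or V E D \<Longrightarrow> one_perfect_orientation V E D"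
  unfolding one_perfect_orientation_def using good_or_props[of V E D] unfolding good_or_def by blast

definition clique_nbr :: "('a \<Rightarrow> 'a \<Rightarrow> bool) \<Rightarrow> 'a \<Rightarrow> bool" where
  "clique_nbr E v \<longleftrightarrow> (\<forall>x y. E v x \<longrightarrow> E v y \<longrightarrow> x \<noteq> y \<longrightarrow> E x y)"

lemma ext_opo:
  assumes sg: "simple_graph V E" and cl: "clique_nbr E v"
    and opo: "one_perfect_orientation (V - {v}) (del_vertex v E) D'"
  shows "one_perfect_orientation V E (\<lambda>u w. D' u w \<or> (u = v \<and> E v w))"
proof -
  note o = opo_props[OF opo]
  let ?D = "\<lambda>u w. D' u w \<or> (u = v \<and> E v w)"
  have nv: "u \<noteq> v" "w \<noteq> v" if "D' u w" for u w using o(1)[OF that] unfolding del_vertex_def by simp_all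
  have "orientation V E ?D"
    unfolding orientation_def
  proof (intro conjI allI impI)
    fix u w assume "?D u w"
    then show "E u w" using o(1) unfolding del_vertex_def by blast
  next
    fix u w assume e: "E u w"
    show "?D u w \<or> ?D w u"
    proof (cases "u = v \<or> w = v")
      case True then show ?thesis using e sg_props(4)[OF sg e] by blast
    next
      case False
      then have "del_vertex v E u w" using e unfolding del_vertex_def by simp
      then show ?thesis using o(2) by blast
    qed
  next
    fix u w assume d: "?D u w"
    show "\<not> ?D w u"
    proof
      assume d2: "?D w u"
      from d consider "D' u w" | "u = v" "E v w" by blast
      then show False
      proof cases
        case 1 then show False using d2 o(3) nv by blast
      next
        case 2
        then have "w \<noteq> v" using sg_props(3)[OF sg 2(2)] by blast
        then show False using d2 2 nv by blast
      qed
    qed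
  qed
  moreover have "\<forall>u\<in>V. \<forall>x y. ?D u x \<and> ?D u y \<and> x \<noteq> y \<longrightarrow> E x y"
  proof (intro ballI allI impI)
    fix u x y assume u: "u \<in> V" and h: "?D u x \<and> ?D u y \<and> x \<noteq> y"
    show "E x y"
    proof (cases "u = v")
      case True
      then have "E v x" "E v y" using h nv by blast+
      then show ?thesis using cl h unfolding clique_nbr_def by blast
    next
      case False
      then have "D' u x" "D' u y" using h by blast+
      then have "del_vertex v E x y" using o(4)[of u x y] u False h by blast
      then show ?thesis unfolding del_vertex_def by simp
    qed
  qed
  ultimately show ?thesis unfolding one_perfect_orientation_def by blast
qed

lemma del_reach_sym:
  assumes sg: "simple_graph V E" and r: "reachable S (del_vertex v E) x y"
  shows "reachable S (del_vertex v E) y x"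
proof (rule reach_sym[OF _ r])
  fix u w assume "del_vertex v E u w"
  then show "del_vertex v E w u" using sg_props(4)[OF sg] unfolding del_vertex_def by blast
qed

lemma del_conn:
  assumes sg: "simple_graph V E" and conn: "connected_graph V E" and v: "v \<in> V"
    and u0: "E v u0" and cl: "clique_nbr E v"
  shows "connected_graph (V - {v}) (del_vertex v E)"
proof -
  let ?V' = "V - {v}" and ?E' = "del_vertex v E"
  have u0V: "u0 \<in> ?V'" using sg_props[OF sg u0] by blast
  have main: "reachable ?V' ?E' u0 a" if a: "a \<in> ?V'" for a
  proof -
    have "reachable V E u0 a" using conn_reach[OF conn] u0V a by blast
    then have "(\<lambda>x y. x \<in> V \<and> y \<in> V \<and> E x y)\<^sup>*\<^sup>* u0 a" unfolding reachable_def by simp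
    then have "a = v \<or> reachable ?V' ?E' u0 a"
    proof (induction rule: rtranclp_induct)
      case base then show ?case using reach_refl[OF u0V] by simp
    next
      case (step y z)
      show ?case
      proof (cases "z = v")
        case True then show ?thesis by simp
      next
        case zv: False
        show ?thesis
        proof (cases "y = v")
          case True
          then have "E v z" using step(2) by simp
          show ?thesis
          proof (cases "z = u0")
            case True then show ?thesis using reach_refl[OF u0V] by simp
          next
            case False
            then have "E u0 z" using cl u0 \<open>E v z\<close> unfolding clique_nbr_def by blast
            then have "?E' u0 z" using zv u0V unfolding del_vertex_def by simp
            moreover have "z \<in> ?V'" using step(2) zv by simp
            ultimately show ?thesis using reach_step u0V by metis
          qed
        next
          case False
          then have r: "reachable ?V' ?E' u0 y" using step(3) by simp
          have "?E' y z" using step(2) False zv unfolding del_vertex_def by simp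
          moreover have "y \<in> ?V'" "z \<in> ?V'" using step(2) False zv by simp_all
          ultimately have "reachable ?V' ?E' y z" by (intro reach_step)
          then show ?thesis using reach_trans[OF r] by simp
        qed
      qed
    qed
    then show ?thesis using a by simp
  qed
  show ?thesis
    unfolding connected_graph_def
  proof (intro conjI ballI)
    show "?V' \<noteq> {}" using u0V by blast
  next
    fix a b assume "a \<in> ?V'" "b \<in> ?V'"
    then show "reachable ?V' ?E' a b"
      using reach_trans[OF del_reach_sym[OF sg main] main] by blast
  qed
qed

lemma complete_props:
  assumes "is_complete_graph W F" "u \<in> W" "w \<in> W" "u \<noteq> w"
  shows "F u w"
  using assms unfolding is_complete_graph_def by blast

lemma complete_not_long_cycle:
  assumes comp: "is_complete_graph W F" and cyc: "is_cycle_graph W F"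
  shows "card W \<le> 3"
proof (rule ccontr)
  assume "\<not> card W \<le> 3"
  then have c4: "4 \<le> card W" by simp
  have sg: "simple_graph W F" using comp unfolding is_complete_graph_def by simp
  have fin: "finite W" using sg unfolding simple_graph_def by simp
  then have "W \<noteq> {}" using c4 by auto
  then obtain u where u: "u \<in> W" by blast
  have "{w \<in> W. F u w} = W - {u}"
  proof
    show "{w \<in> W. F u w} \<subseteq> W - {u}" using sg_props(3)[OF sg] by blast
    show "W - {u} \<subseteq> {w \<in> W. F u w}" using complete_props[OF comp u] by blast
  qed
  then have "degree W F u = card W - 1" unfolding degree_def using fin u by simp
  moreover have "degree W F u = 2" using cyc u unfolding is_cycle_graph_def by simp
  ultimately show False using c4 by simp
qed

lemma subgraph_del_to_full:
  "subgraph W F (V - {v}) (del_vertex v E) \<Longrightarrow> subgraph W F V E"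
  unfolding subgraph_def del_vertex_def by blast

lemma del_blocks:
  assumes sg: "simple_graph V E" and bc: "block_cactus V E" and cl: "clique_nbr E v"
    and blk: "is_block (V - {v}) (del_vertex v E) W F"
  shows "is_block V E W F \<or> (is_complete_graph W F \<and> (is_cycle_graph W F \<longrightarrow> card W \<le> 3))"
proof -
  let ?V' = "V - {v}" and ?E' = "del_vertex v E"
  have sub': "subgraph W F ?V' ?E'" using block_subgraph[OF blk] .
  have sub: "subgraph W F V E" using subgraph_del_to_full[OF sub'] .
  have bic: "biconnected W F" using block_bic[OF blk] .
  obtain WB FB where B: "is_block V E WB FB" "W \<subseteq> WB" "\<forall>u w. F u w \<longrightarrow> FB u w"
    using block_exists[OF sg sub bic] by blast
  note spB = subgraph_props[OF block_subgraph[OF B(1)]]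
  show ?thesis
  proof (cases "v \<in> WB")
    case False
    have "subgraph WB FB ?V' ?E'"
      unfolding subgraph_def
    proof (intro conjI allI impI)
      show "simple_graph WB FB" using spB(1) .
      show "WB \<subseteq> ?V'" using spB(2) False by blast
    next
      fix u w assume f: "FB u w"
      have "u \<in> WB" "w \<in> WB" using sg_props[OF spB(1) f] by simp_all
      then show "?E' u w" using spB(3)[OF f] False unfolding del_vertex_def by blast
    qed
    moreover have "biconnected WB FB" using block_bic[OF B(1)] .
    ultimately have "WB = W \<and> FB = F" using blk B(2,3) unfolding is_block_def by blast
    then show ?thesis using B(1) by simp
  next
    case True
    have compB: "is_complete_graph WB FB"
    proof -
      have "is_cycle_graph WB FB \<or> is_complete_graph WB FB" using bc B(1) unfolding block_cactus_def by blast
      moreover have "is_complete_graph WB FB" if cyc: "is_cycle_graph WB FB"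
      proof (cases "card WB = 3")
        case True then show ?thesis using cyc3_complete[OF cyc] by simp
      next
        case False
        then have c4: "4 \<le> card WB" using cyc unfolding is_cycle_graph_def by simp
        have "card {w \<in> WB. FB v w} = 2" using cyc \<open>v \<in> WB\<close> unfolding is_cycle_graph_def degree_def by simp
        then obtain a b where ab: "{w \<in> WB. FB v w} = {a, b}" "a \<noteq> b" by (auto simp: card_2_iff)
        then have fa: "FB v a" "a \<in> WB" and fb: "FB v b" "b \<in> WB" by auto
        have "E a b" using cl spB(3)[OF fa(1)] spB(3)[OF fb(1)] ab(2) unfolding clique_nbr_def by blast
        then have "FB a b" using block_edge[OF sg B(1) fa(2) fb(2)] by simp
        then show ?thesis using cyc_na[OF cyc c4 fa(1) fb(1) ab(2)] by simp
      qed
      ultimately show ?thesis by blast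
    qed
    have compW: "is_complete_graph W F"
      unfolding is_complete_graph_def
    proof (intro conjI ballI impI)
      show "simple_graph W F" using subgraph_props(1)[OF sub] .
    next
      fix u w assume uw: "u \<in> W" "w \<in> W" "u \<noteq> w"
      have "FB u w" using complete_props[OF compB] uw B(2) by blast
      then have "E u w" using spB(3) by blast
      moreover have "u \<in> ?V'" "w \<in> ?V'" using uw subgraph_props(2)[OF sub'] by blast+
      ultimately have "?E' u w" unfolding del_vertex_def by simp
      moreover have sg': "simple_graph ?V' ?E'" using del_simple[OF sg] .
      ultimately show "F u w" using block_edge[OF sg' blk uw(1,2)] by simp
    qed
    then show ?thesis using complete_not_long_cycle by blast
  qed
qed


lemma R_exists:
  assumes sg: "simple_graph V E" and conn: "connected_graph V E"
    and uniq: "\<forall>W1 F1 W2 F2.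
       is_block V E W1 F1 \<and> is_cycle_graph W1 F1 \<and> card W1 \<ge> 4 \<and>
       is_block V E W2 F2 \<and> is_cycle_graph W2 F2 \<and> card W2 \<ge> 4
       \<longrightarrow> W1 = W2 \<and> F1 = F2"
  shows "\<exists>R. R \<subseteq> V \<and> R \<noteq> {} \<and>
    (\<forall>v x y. v \<notin> R \<longrightarrow> x \<in> R \<longrightarrow> y \<in> R \<longrightarrow> reachable (V - {v}) (del_vertex v E) x y) \<and>
    (\<forall>W F v. is_block V E W F \<and> is_cycle_graph W F \<and> 4 \<le> card W \<and> v \<in> W \<longrightarrow> v \<in> R) \<and>
    (V \<subseteq> R \<longrightarrow> (\<forall>u\<in>V. degree V E u \<le> 2))"
proof (cases "\<exists>W F. is_block V E W F \<and> is_cycle_graph W F \<and> 4 \<le> card W")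
  case True
  then obtain WC FC where C: "is_block V E WC FC" "is_cycle_graph WC FC" "4 \<le> card WC" by blast
  note sp = subgraph_props[OF block_subgraph[OF C(1)]]
  have f1: "WC \<subseteq> V" using sp(2) .
  have f2: "WC \<noteq> {}" using C(3) by auto
  have f3: "\<forall>v x y. v \<notin> WC \<longrightarrow> x \<in> WC \<longrightarrow> y \<in> WC \<longrightarrow> reachable (V - {v}) (del_vertex v E) x y"
  proof (intro allI impI)
    fix v x y assume v: "v \<notin> WC" and xy: "x \<in> WC" "y \<in> WC"
    have "connected_graph WC FC" using C(2) unfolding is_cycle_graph_def by simp
    then have r: "reachable WC FC x y" using xy by (rule conn_reach)
    show "reachable (V - {v}) (del_vertex v E) x y"
    proof (rule reach_mono[OF r])
      show "WC \<subseteq> V - {v}" using sp(2) v by blast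
    next
      fix u w assume "u \<in> WC" "w \<in> WC" "FC u w"
      then show "del_vertex v E u w" using sp(3) v unfolding del_vertex_def by blast
    qed
  qed
  have f4: "\<forall>W F v. is_block V E W F \<and> is_cycle_graph W F \<and> 4 \<le> card W \<and> v \<in> W \<longrightarrow> v \<in> WC"
  proof (intro allI impI)
    fix W F v assume h: "is_block V E W F \<and> is_cycle_graph W F \<and> 4 \<le> card W \<and> v \<in> W"
    have "W = WC \<and> F = FC" apply (rule uniq[rule_format]) using h C by simp
    then have "W = WC" by simp
    then show "v \<in> WC" using h by simp
  qed
  have f5: "V \<subseteq> WC \<longrightarrow> (\<forall>u\<in>V. degree V E u \<le> 2)"
  proof (intro impI ballI)
    fix u assume VW: "V \<subseteq> WC" and u: "u \<in> V"
    have "{w \<in> V. E u w} = {w \<in> WC. FC u w}"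
    proof
      show "{w \<in> V. E u w} \<subseteq> {w \<in> WC. FC u w}"
      proof
        fix w assume "w \<in> {w \<in> V. E u w}"
        then have w: "w \<in> WC" "E u w" using VW by auto
        have "u \<in> WC" using VW u by auto
        then show "w \<in> {w \<in> WC. FC u w}" using block_edge[OF sg C(1) _ w(1) w(2)] w by simp
      qed
      show "{w \<in> WC. FC u w} \<subseteq> {w \<in> V. E u w}"
        using sp(2,3) by blast
    qed
    moreover have "card {w \<in> WC. FC u w} = 2" using C(2) u VW unfolding is_cycle_graph_def degree_def by blast
    ultimately show "degree V E u \<le> 2" unfolding degree_def by simp
  qed
  show ?thesis by (rule exI[of _ WC], intro conjI f1 f2 f3 f4 f5)
next
  case False
  have "V \<noteq> {}" using conn unfolding connected_graph_def by simp
  then obtain r where r: "r \<in> V" by blast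
  have g1: "{r} \<subseteq> V" using r by simp
  have g2: "{r} \<noteq> {}" by simp
  have g3: "\<forall>v x y. v \<notin> {r} \<longrightarrow> x \<in> {r} \<longrightarrow> y \<in> {r} \<longrightarrow> reachable (V - {v}) (del_vertex v E) x y"
  proof (intro allI impI)
    fix v x y assume "v \<notin> {r}" "x \<in> {r}" "y \<in> {r}"
    then have "x = r" "y = r" "r \<in> V - {v}" using r by auto
    then show "reachable (V - {v}) (del_vertex v E) x y" using reach_refl[of r "V - {v}" "del_vertex v E"] by simp
  qed
  have g4: "\<forall>W F v. is_block V E W F \<and> is_cycle_graph W F \<and> 4 \<le> card W \<and> v \<in> W \<longrightarrow> v \<in> {r}"
    using False by blast
  have g5: "V \<subseteq> {r} \<longrightarrow> (\<forall>u\<in>V. degree V E u \<le> 2)"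
  proof (intro impI ballI)
    fix u assume Vr: "V \<subseteq> {r}" and u: "u \<in> V"
    have "{w \<in> V. E u w} = {}"
    proof (rule ccontr)
      assume "{w \<in> V. E u w} \<noteq> {}"
      then obtain w where "w \<in> V" "E u w" by blast
      moreover then have "u \<noteq> w" using sg_props(3)[OF sg] by blast
      ultimately show False using Vr u by blast
    qed
    then show "degree V E u \<le> 2" unfolding degree_def by (simp only: card.empty)
  qed
  show ?thesis by (rule exI[of _ "{r}"], intro conjI g1 g2 g3 g4 g5)
qed


lemma clique_lemma:
  assumes sg: "simple_graph V E" and bc: "block_cactus V E"
    and RV: "R \<subseteq> V"
    and Rconn: "\<forall>v x y. v \<notin> R \<longrightarrow> x \<in> R \<longrightarrow> y \<in> R \<longrightarrow> reachable (V - {v}) (del_vertex v E) x y"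
    and RLC: "\<forall>W F v. is_block V E W F \<and> is_cycle_graph W F \<and> 4 \<le> card W \<and> v \<in> W \<longrightarrow> v \<in> R"
    and v: "v \<in> V" "v \<notin> R"
    and dw: "\<forall>x\<in>V. \<exists>p. p 0 = x \<and> p (d x) \<in> R \<and> walk E p (d x)"
    and dle: "\<forall>x p k. p 0 = x \<and> p k \<in> R \<and> walk E p k \<longrightarrow> d x \<le> k"
    and dmax: "\<forall>u\<in>V. d u \<le> d v"
  shows "clique_nbr E v"
  unfolding clique_nbr_def
proof (intro allI impI)
  fix x y assume vx: "E v x" and vy: "E v y" and xy: "x \<noteq> y"
  show "E x y"
  proof (rule ccontr)
    assume nxy: "\<not> E x y"
    let ?V' = "V - {v}" and ?E' = "del_vertex v E"
    have xV: "x \<in> V" and xv: "x \<noteq> v" using sg_props[OF sg vx] by auto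
    have yV: "y \<in> V" and yv: "y \<noteq> v" using sg_props[OF sg vy] by auto
    have avoid: "\<exists>r\<in>R. reachable ?V' ?E' z r" if z: "z \<in> V" "z \<noteq> v" for z
    proof -
      obtain p where p: "p 0 = z" "p (d z) \<in> R" "walk E p (d z)" using dw z(1) by blast
      have pin: "p i \<in> ?V'" if i: "i \<le> d z" for i
      proof (cases i)
        case 0 then show ?thesis using p(1) z by simp
      next
        case (Suc j)
        have "j < d z" using i Suc by simp
        then have e: "E (p j) (p i)" using p(3) Suc unfolding walk_def by simp
        have piV: "p i \<in> V" using sg_props(2)[OF sg e] .
        have ws: "walk E (\<lambda>j. p (j + i)) (d z - i)" using walk_suffix[OF p(3) i] .
        have "p (d z - i + i) \<in> R" using p(2) i by simp
        then have "d (p i) \<le> d z - i" using dle[rule_format, of "\<lambda>j. p (j + i)" "p i" "d z - i"] ws by simp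
        moreover have "d z \<le> d v" using dmax z(1) by blast
        ultimately have "p i \<noteq> v" using Suc i by auto
        then show ?thesis using piV by simp
      qed
      have "walk ?E' p (d z)"
        unfolding walk_def
      proof (intro allI impI)
        fix j assume j: "j < d z"
        have "E (p j) (p (Suc j))" using p(3) j unfolding walk_def by simp
        moreover have "p j \<noteq> v" "p (Suc j) \<noteq> v" using pin[of j] pin[of "Suc j"] j by simp_all
        ultimately show "?E' (p j) (p (Suc j))" unfolding del_vertex_def by simp
      qed
      moreover have "\<forall>i\<le>d z. p i \<in> ?V'" using pin by blast
      ultimately have "reachable ?V' ?E' (p 0) (p (d z))" by (rule walk_reach)
      then show ?thesis using p(1,2) by blast
    qed
    obtain rx where rx: "rx \<in> R" "reachable ?V' ?E' x rx" using avoid[OF xV xv] by blast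
    obtain ry where ry: "ry \<in> R" "reachable ?V' ?E' y ry" using avoid[OF yV yv] by blast
    have "reachable ?V' ?E' rx ry" using Rconn[rule_format, OF v(2) rx(1) ry(1)] .
    then have "reachable ?V' ?E' x ry" by (rule reach_trans[OF rx(2)])
    then have rxy: "reachable ?V' ?E' x y" using del_reach_sym[OF sg ry(2)] by (rule reach_trans)
    define Q where "Q = (\<lambda>k. \<exists>q. q 0 = x \<and> q k = y \<and> walk ?E' q k)"
    obtain q0 k0 where "q0 0 = x" "q0 k0 = y" "walk ?E' q0 k0"
      using reach_walk[OF rxy] by blast
    then have "Q k0" unfolding Q_def by blast
    then obtain k where Qk: "Q k" and mink: "\<And>m. m < k \<Longrightarrow> \<not> Q m"
      using exists_least_iff[of Q] by blast
    then obtain q where q: "q 0 = x" "q k = y" "walk ?E' q k" unfolding Q_def by blast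
    have qV: "q i \<in> ?V'" if "i \<le> k" for i
    proof (cases i)
      case 0 then show ?thesis using q(1) xV xv by simp
    next
      case (Suc j)
      then have "?E' (q j) (q i)" using q(3) that unfolding walk_def by simp
      then show ?thesis using sg_props(2)[OF sg] unfolding del_vertex_def by blast
    qed
    have qE: "E (q i) (q (Suc i))" if "i < k" for i
      using q(3) that unfolding walk_def del_vertex_def by simp
    have qinj: "q i \<noteq> q j" if ij: "i < j" "j \<le> k" for i j
    proof
      assume eq: "q i = q j"
      obtain q' where "walk ?E' q' (k - (j - i))" "q' 0 = q 0" "q' (k - (j - i)) = q k"
        using walk_short_eq_ex[OF q(3) ij eq] by blast
      then have "Q (k - (j - i))" unfolding Q_def using q(1,2) by (intro exI[of _ q']) simp
      moreover have "k - (j - i) < k" using ij by simp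
      ultimately show False using mink by blast
    qed
    have k0: "k \<noteq> 0" using q(1,2) xy by (cases "k = 0") auto
    have k1: "k \<noteq> 1"
    proof
      assume "k = 1"
      then have "E (q 0) (q 1)" using qE[of 0] by simp
      then show False using q(1,2) \<open>k = 1\<close> nxy by simp
    qed
    define L where "L = Suc (Suc k)"
    define c where "c = (\<lambda>i. if i = 0 then v else q (i - 1))"
    have L3: "3 \<le> L" using k0 k1 unfolding L_def by simp
    have cinj: "inj_on c {..<L}"
    proof (rule inj_onI)
      fix i j assume i: "i \<in> {..<L}" and j: "j \<in> {..<L}" and eq: "c i = c j"
      have iq: "i - 1 \<le> k" "j - 1 \<le> k" using i j unfolding L_def by auto
      show "i = j"
      proof (cases "i = 0")
        case True
        show ?thesis
        proof (rule ccontr)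
          assume "i \<noteq> j"
          then have "j \<noteq> 0" using True by simp
          then have "v = q (j - 1)" using eq True unfolding c_def by simp
          then show False using qV[OF iq(2)] by simp
        qed
      next
        case inz: False
        show ?thesis
        proof (cases "j = 0")
          case True
          then have "q (i - 1) = v" using eq inz unfolding c_def by simp
          then show ?thesis using qV[OF iq(1)] by simp
        next
          case False
          then have eq2: "q (i - 1) = q (j - 1)" using eq inz unfolding c_def by simp
          show ?thesis
          proof (rule ccontr)
            assume "i \<noteq> j"
            then have "i - 1 < j - 1 \<or> j - 1 < i - 1" using inz False by arith
            then show False
            proof
              assume "i - 1 < j - 1"
              from qinj[OF this iq(2)] eq2 show False by simp
            next
              assume "j - 1 < i - 1"
              from qinj[OF this iq(1)] eq2 show False by simp
            qed
          qed
        qed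
      qed
    qed
    have cV: "\<forall>i<L. c i \<in> V"
    proof (intro allI impI)
      fix i assume "i < L"
      then have "i - 1 \<le> k" unfolding L_def by simp
      then show "c i \<in> V" using qV v(1) unfolding c_def by auto
    qed
    have cedges: "\<forall>i. Suc i < L \<longrightarrow> E (c i) (c (Suc i))"
    proof (intro allI impI)
      fix i assume iL: "Suc i < L"
      show "E (c i) (c (Suc i))"
      proof (cases "i = 0")
        case True then show ?thesis using vx q(1) unfolding c_def by simp
      next
        case False
        then have "i - 1 < k" using iL unfolding L_def by simp
        then have "E (q (i - 1)) (q (Suc (i - 1)))" by (rule qE)
        then show ?thesis using False unfolding c_def by simp
      qed
    qed
    have clast: "E (c (L - 1)) (c 0)"
      using sg_props(4)[OF sg vy] q(2) unfolding c_def L_def by simp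
    have H: "subgraph (c ` {..<L}) (cyc_rel c L) V E \<and> biconnected (c ` {..<L}) (cyc_rel c L)"
      using cycle_bic[OF L3 cinj sg cV cedges clast] .
    obtain WB FB where B: "is_block V E WB FB" "c ` {..<L} \<subseteq> WB" "\<forall>u w. cyc_rel c L u w \<longrightarrow> FB u w"
      using block_exists[OF sg conjunct1[OF H] conjunct2[OF H]] by blast
    note spB = subgraph_props[OF block_subgraph[OF B(1)]]
    have c0: "c 0 = v" and c1: "c 1 = x" and cl: "c (L - 1) = y"
      using q(1,2) unfolding c_def L_def by simp_all
    have "c 0 \<in> c ` {..<L}" "c 1 \<in> c ` {..<L}" using L3 by simp_all
    then have vW: "v \<in> WB" and xW: "x \<in> WB" using B(2) c0 c1 by blast+
    have "c (L - 1) \<in> c ` {..<L}" using L3 by simp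
    then have yW: "y \<in> WB" using B(2) cl by blast
    have "cyc_rel c L (c 0) (c (Suc 0))" using cyc_rel_step[of 0 L c] L3 by simp
    then have Fvx: "FB v x" using B(3) c0 c1 by simp
    have "cyc_rel c L (c (L - 1)) (c 0)" by (rule cyc_rel_last)
    then have "FB y v" using B(3) c0 cl by simp
    then have Fvy: "FB v y" using sg_props(4)[OF spB(1)] by blast
    have nFxy: "\<not> FB x y" using spB(3) nxy by blast
    have "is_cycle_graph WB FB \<or> is_complete_graph WB FB" using bc B(1) unfolding block_cactus_def by blast
    moreover have "\<not> is_complete_graph WB FB" using complete_props[of WB FB x y] xW yW xy nFxy by blast
    ultimately have cycB: "is_cycle_graph WB FB" by blast
    have "4 \<le> card WB" using cyc_card4[OF cycB Fvx Fvy xy nFxy] .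
    then have "v \<in> R" using RLC B(1) cycB vW by blast
    then show False using v(2) by simp
  qed
qed


lemma bwd_dir:
  "\<forall>(V::'a set) (E::'a \<Rightarrow> 'a \<Rightarrow> bool). card V = n \<longrightarrow> simple_graph V E \<longrightarrow> connected_graph V E \<longrightarrow> block_cactus V E \<longrightarrow>
    (\<forall>W1 F1 W2 F2.
       is_block V E W1 F1 \<and> is_cycle_graph W1 F1 \<and> card W1 \<ge> 4 \<and>
       is_block V E W2 F2 \<and> is_cycle_graph W2 F2 \<and> card W2 \<ge> 4
       \<longrightarrow> W1 = W2 \<and> F1 = F2) \<longrightarrow> one_perfectly_orientable V E"
proof (induction n rule: less_induct)
  case (less n)
  show ?case
  proof (intro allI impI)
    fix V :: "'a set" and E :: "'a \<Rightarrow> 'a \<Rightarrow> bool"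
    assume cV: "card V = n" and sg: "simple_graph V E" and conn: "connected_graph V E"
      and bc: "block_cactus V E"
      and uniq: "\<forall>W1 F1 W2 F2.
       is_block V E W1 F1 \<and> is_cycle_graph W1 F1 \<and> card W1 \<ge> 4 \<and>
       is_block V E W2 F2 \<and> is_cycle_graph W2 F2 \<and> card W2 \<ge> 4
       \<longrightarrow> W1 = W2 \<and> F1 = F2"
    have finV: "finite V" using sg unfolding simple_graph_def by simp
    from R_exists[OF sg conn uniq] obtain R where Rall: "R \<subseteq> V \<and> R \<noteq> {} \<and>
      (\<forall>v x y. v \<notin> R \<longrightarrow> x \<in> R \<longrightarrow> y \<in> R \<longrightarrow> reachable (V - {v}) (del_vertex v E) x y) \<and>
      (\<forall>W F v. is_block V E W F \<and> is_cycle_graph W F \<and> 4 \<le> card W \<and> v \<in> W \<longrightarrow> v \<in> R) \<and>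
      (V \<subseteq> R \<longrightarrow> (\<forall>u\<in>V. degree V E u \<le> 2))" ..
    have RV: "R \<subseteq> V" and Rne: "R \<noteq> {}"
      and Rconn: "\<forall>v x y. v \<notin> R \<longrightarrow> x \<in> R \<longrightarrow> y \<in> R \<longrightarrow> reachable (V - {v}) (del_vertex v E) x y"
      and RLC: "\<forall>W F v. is_block V E W F \<and> is_cycle_graph W F \<and> 4 \<le> card W \<and> v \<in> W \<longrightarrow> v \<in> R"
      and Rbase: "V \<subseteq> R \<longrightarrow> (\<forall>u\<in>V. degree V E u \<le> 2)"
      using Rall by simp_all
    obtain r0 where r0: "r0 \<in> R" using Rne by blast
    define P where "P = (\<lambda>x k. \<exists>p. p 0 = x \<and> p k \<in> R \<and> walk E p k)"
    define d where "d = (\<lambda>x. LEAST k. P x k)"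
    have wex: "\<exists>k. P x k" if x: "x \<in> V" for x
    proof -
      have "r0 \<in> V" using r0 RV by blast
      then have "reachable V E x r0" using conn_reach[OF conn x] by simp
      then obtain p k where "p 0 = x" "p k = r0" "walk E p k" using reach_walk[of V E x r0] by blast
      then show ?thesis unfolding P_def using r0 by blast
    qed
    have dw: "\<forall>x\<in>V. \<exists>p. p 0 = x \<and> p (d x) \<in> R \<and> walk E p (d x)"
    proof
      fix x assume "x \<in> V"
      then have "P x (d x)" unfolding d_def by (rule LeastI_ex[OF wex])
      then show "\<exists>p. p 0 = x \<and> p (d x) \<in> R \<and> walk E p (d x)" unfolding P_def .
    qed
    have dle: "\<forall>x p k. p 0 = x \<and> p k \<in> R \<and> walk E p k \<longrightarrow> d x \<le> k"
    proof (intro allI impI)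
      fix x p k assume "p 0 = x \<and> p k \<in> R \<and> walk E p k"
      then have "P x k" unfolding P_def by blast
      then show "d x \<le> k" unfolding d_def by (rule Least_le)
    qed
    have d0: "d x = 0" if "x \<in> R" for x
    proof -
      have "walk E (\<lambda>_. x) 0" unfolding walk_def by simp
      then have "d x \<le> 0" using dle[rule_format, of "\<lambda>_. x" x 0] that by simp
      then show ?thesis by simp
    qed
    show "one_perfectly_orientable V E"
    proof (cases "\<forall>x\<in>V. d x = 0")
      case True
      have "V \<subseteq> R"
      proof
        fix x assume x: "x \<in> V"
        then obtain p where "p 0 = x" "p (d x) \<in> R" using dw by blast
        then show "x \<in> R" using True x by simp
      qed
      then have degs: "\<forall>u\<in>V. degree V E u \<le> 2" using Rbase by simp
      have "\<exists>D. good_or V E D"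
        using deg2_orient[of "card V", rule_format, OF refl finV sg degs[rule_format]] by (rule conjunct2)
      then obtain D where "good_or V E D" by blast
      then show ?thesis unfolding one_perfectly_orientable_def using good_opo by blast
    next
      case False
      then obtain x0 where x0: "x0 \<in> V" "d x0 \<noteq> 0" by blast
      have fin: "finite (d ` V)" using finV by simp
      have ne: "d ` V \<noteq> {}" using x0 by blast
      have "Max (d ` V) \<in> d ` V" using Max_in[OF fin ne] .
      then obtain v where dvm': "Max (d ` V) = d v" and vV: "v \<in> V" by (rule imageE)
      then have dvm: "d v = Max (d ` V)" by simp
      have dmax: "\<forall>u\<in>V. d u \<le> d v" using Max_ge[OF fin] dvm by simp
      have "d x0 \<le> d v" using dmax x0(1) by blast
      then have dvpos: "0 < d v" using x0(2) by simp
      have vR: "v \<notin> R"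
      proof
        assume "v \<in> R"
        then have "d v = 0" by (rule d0)
        then show False using dvpos by simp
      qed
      obtain p where p: "p 0 = v" "p (d v) \<in> R" "walk E p (d v)" using dw vV by blast
      have "E (p 0) (p (Suc 0))" using p(3) dvpos unfolding walk_def by blast
      then have u0: "E v (p 1)" using p(1) by simp
      have cl: "clique_nbr E v"
        using clique_lemma[OF sg bc RV Rconn RLC vV vR dw dle dmax] .
      let ?V' = "V - {v}" and ?E' = "del_vertex v E"
      have sg': "simple_graph ?V' ?E'" using del_simple[OF sg] .
      have conn': "connected_graph ?V' ?E'" using del_conn[OF sg conn vV u0 cl] .
      have bc': "block_cactus ?V' ?E'"
        unfolding block_cactus_def
      proof (intro allI impI)
        fix W F assume blk: "is_block ?V' ?E' W F"
        from del_blocks[OF sg bc cl blk]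
        show "is_cycle_graph W F \<or> is_complete_graph W F"
        proof
          assume "is_block V E W F"
          then show ?thesis using bc unfolding block_cactus_def by blast
        next
          assume "is_complete_graph W F \<and> (is_cycle_graph W F \<longrightarrow> card W \<le> 3)"
          then show ?thesis by simp
        qed
      qed
      have lift: "is_block V E W F" if "is_block ?V' ?E' W F" "is_cycle_graph W F" "4 \<le> card W" for W F
      proof -
        from del_blocks[OF sg bc cl that(1)]
        show ?thesis
        proof
          assume "is_complete_graph W F \<and> (is_cycle_graph W F \<longrightarrow> card W \<le> 3)"
          then have "card W \<le> 3" using that(2) by simp
          then show ?thesis using that(3) by simp
        qed
      qed
      have uniq': "\<forall>W1 F1 W2 F2.
       is_block ?V' ?E' W1 F1 \<and> is_cycle_graph W1 F1 \<and> card W1 \<ge> 4 \<and>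
       is_block ?V' ?E' W2 F2 \<and> is_cycle_graph W2 F2 \<and> card W2 \<ge> 4
       \<longrightarrow> W1 = W2 \<and> F1 = F2"
      proof (intro allI impI)
        fix W1 F1 W2 F2
        assume h: "is_block ?V' ?E' W1 F1 \<and> is_cycle_graph W1 F1 \<and> card W1 \<ge> 4 \<and>
          is_block ?V' ?E' W2 F2 \<and> is_cycle_graph W2 F2 \<and> card W2 \<ge> 4"
        then have "is_block V E W1 F1" "is_block V E W2 F2" using lift[of W1 F1] lift[of W2 F2] by simp_all
        then show "W1 = W2 \<and> F1 = F2" apply - apply (rule uniq[rule_format]) using h by simp
      qed
      have "card V > 0" using finV vV card_gt_0_iff by blast
      then have lt: "card ?V' < n" using cV finV vV by simp
      have "one_perfectly_orientable ?V' ?E'"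
        using less.IH[OF lt, rule_format, OF refl sg' conn' bc' uniq'[rule_format]] .
      then obtain D' where "one_perfect_orientation ?V' ?E' D'" unfolding one_perfectly_orientable_def by blast
      from ext_opo[OF sg cl this] show ?thesis unfolding one_perfectly_orientable_def by blast
    qed
  qed
qed


theorem corollary3p3:
  fixes V :: "'a set" and E :: "'a \<Rightarrow> 'a \<Rightarrow> bool"
  assumes "simple_graph V E" and "connected_graph V E" and "block_cactus V E"
  shows "one_perfectly_orientable V E \<longleftrightarrow>
    (\<forall>W1 F1 W2 F2.
       is_block V E W1 F1 \<and> is_cycle_graph W1 F1 \<and> card W1 \<ge> 4 \<and>
       is_block V E W2 F2 \<and> is_cycle_graph W2 F2 \<and> card W2 \<ge> 4
       \<longrightarrow> W1 = W2 \<and> F1 = F2)"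
proof
  assume "one_perfectly_orientable V E"
  then obtain D where opo: "one_perfect_orientation V E D" unfolding one_perfectly_orientable_def by blast
  show "\<forall>W1 F1 W2 F2.
       is_block V E W1 F1 \<and> is_cycle_graph W1 F1 \<and> card W1 \<ge> 4 \<and>
       is_block V E W2 F2 \<and> is_cycle_graph W2 F2 \<and> card W2 \<ge> 4
       \<longrightarrow> W1 = W2 \<and> F1 = F2"
  proof (intro allI impI)
    fix W1 F1 W2 F2
    assume h: "is_block V E W1 F1 \<and> is_cycle_graph W1 F1 \<and> card W1 \<ge> 4 \<and>
       is_block V E W2 F2 \<and> is_cycle_graph W2 F2 \<and> card W2 \<ge> 4"
    then have h1: "is_block V E W1 F1" "is_cycle_graph W1 F1" "4 \<le> card W1"
      and h2: "is_block V E W2 F2" "is_cycle_graph W2 F2" "4 \<le> card W2" by simp_all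
    show "W1 = W2 \<and> F1 = F2" using fwd_dir[OF assms(1,2) opo h1 h2] .
  qed
next
  assume uniq: "\<forall>W1 F1 W2 F2.
       is_block V E W1 F1 \<and> is_cycle_graph W1 F1 \<and> card W1 \<ge> 4 \<and>
       is_block V E W2 F2 \<and> is_cycle_graph W2 F2 \<and> card W2 \<ge> 4
       \<longrightarrow> W1 = W2 \<and> F1 = F2"
  show "one_perfectly_orientable V E"
    using bwd_dir[of "card V", rule_format, OF refl assms(1,2,3) uniq[rule_format]] .
qed

end
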